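(* Let $E=\mathcal O(0,1,1)\oplus\mathcal O(1,0,1)\oplus\mathcal O(1,1,0)$ on $\mathbb P^1\times\mathbb P^1\times\mathbb P^1$. The discriminant locus $\Delta\subseteq\mathbb P H^0(E)\cong\mathbb P^{11}$ of $E$ is an irreducible hypersurface of degree $6$.
   Context: The discriminant locus is $\Delta=\{[f]\in\mathbb P H^0(\mathbb P^1\times\mathbb P^1\times\mathbb P^1,E) : \mathcal Z(f)\text{ is not reduced of dimension }0\}$, where $\mathcal Z(f)$ is the zero scheme of $f$. A section is $f=(f^{(1)},f^{(2)},f^{(3)})$ with $f^{(i)}$ a bilinear form in the two coordinate pairs $\pi^{(l)}=(\pi^{(l)}_1,\pi^{(l)}_2)$, $l\ne i$. (This is the discriminant relevant to three-player games with two strategies each.) *)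

theory Defs
  imports Complex_Main "HOL-Library.Poly_Mapping" "HOL-Computational_Algebra.Factorial_Ring"
begin

type_synonym cmpoly = "(nat \<Rightarrow>\<^sub>0 nat) \<Rightarrow>\<^sub>0 complex"

definition mon_eval :: "(nat \<Rightarrow>\<^sub>0 nat) \<Rightarrow> (nat \<Rightarrow> complex) \<Rightarrow> complex" where
  "mon_eval m a = (\<Prod>i\<in>Poly_Mapping.keys m. a i ^ Poly_Mapping.lookup m i)"

definition mp_eval :: "cmpoly \<Rightarrow> (nat \<Rightarrow> complex) \<Rightarrow> complex" where
  "mp_eval p a = (\<Sum>m\<in>Poly_Mapping.keys p. Poly_Mapping.lookup p m * mon_eval m a)"

definition mon_degree :: "(nat \<Rightarrow>\<^sub>0 nat) \<Rightarrow> nat" where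
  "mon_degree m = (\<Sum>i\<in>Poly_Mapping.keys m. Poly_Mapping.lookup m i)"

definition mp_vars_below :: "nat \<Rightarrow> cmpoly \<Rightarrow> bool" where
  "mp_vars_below n p \<longleftrightarrow> (\<forall>m\<in>Poly_Mapping.keys p. Poly_Mapping.keys m \<subseteq> {..<n})"

definition mp_homogeneous :: "nat \<Rightarrow> cmpoly \<Rightarrow> bool" where
  "mp_homogeneous d p \<longleftrightarrow> p \<noteq> 0 \<and> (\<forall>m\<in>Poly_Mapping.keys p. mon_degree m = d)"

text \<open>A section f = (f1,f2,f3) is given by its 12 coefficients a_0..a_11:
  f^{(i+1)}(p,q) = sum_{j,k<2} a(4i+2j+k) p_j q_k  (i = 0,1,2),
where f^{(1)} is bilinear in (pi2,pi3), f^{(2)} in (pi1,pi3), f^{(3)} in (pi1,pi2).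
Coordinate pairs pi^{(l)} are functions nat => complex, only indices 0,1 used.\<close>

definition bil :: "(nat \<Rightarrow> complex) \<Rightarrow> nat \<Rightarrow> (nat \<Rightarrow> complex) \<Rightarrow> (nat \<Rightarrow> complex) \<Rightarrow> complex" where
  "bil a i p q = (\<Sum>j<2. \<Sum>k<2. a (4*i + 2*j + k) * p j * q k)"

definition nonzero2 :: "(nat \<Rightarrow> complex) \<Rightarrow> bool" where
  "nonzero2 x \<longleftrightarrow> x 0 \<noteq> 0 \<or> x 1 \<noteq> 0"

definition in_zero_set :: "(nat \<Rightarrow> complex) \<Rightarrow> (nat \<Rightarrow> complex) \<Rightarrow> (nat \<Rightarrow> complex) \<Rightarrow> (nat \<Rightarrow> complex) \<Rightarrow> bool" where
  "in_zero_set a x y z \<longleftrightarrow> nonzero2 x \<and> nonzero2 y \<and> nonzero2 z \<and>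
     bil a 0 y z = 0 \<and> bil a 1 x z = 0 \<and> bil a 2 x y = 0"

text \<open>Z(f) is non-reduced or positive dimensional at the point (x,y,z): the differential of f
at the zero (x,y,z) has a nonzero kernel on the tangent space, i.e. there is a tangent
vector (u,v,w) in C^6, not in the span of the Euler directions (x,0,0),(0,y,0),(0,0,z),
annihilated by df.\<close>
definition singular_zero :: "(nat \<Rightarrow> complex) \<Rightarrow> (nat \<Rightarrow> complex) \<Rightarrow> (nat \<Rightarrow> complex) \<Rightarrow> (nat \<Rightarrow> complex) \<Rightarrow> bool" where
  "singular_zero a x y z \<longleftrightarrow> in_zero_set a x y z \<and>
     (\<exists>u v w. bil a 0 v z + bil a 0 y w = 0 \<and>
              bil a 1 u z + bil a 1 x w = 0 \<and>
              bil a 2 u y + bil a 2 x v = 0 \<and>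
              \<not> (\<exists>s t r. \<forall>j<2. u j = s * x j \<and> v j = t * y j \<and> w j = r * z j))"

text \<open>The discriminant locus (as a cone in C^12 minus 0): nonzero sections whose zero scheme
is not reduced of dimension 0.\<close>
definition discriminant :: "(nat \<Rightarrow> complex) set" where
  "discriminant = {a. (\<exists>i<12. a i \<noteq> 0) \<and> (\<exists>x y z. singular_zero a x y z)}"

end

theory Submission
  imports Defs "HOL-Computational_Algebra.Fundamental_Theorem_Algebra"
begin


definition cc0 :: "(nat \<Rightarrow> 'b::comm_ring_1) \<Rightarrow> 'b" where
 "cc0 a = a 2 * a 6 * a 8 - a 2 * a 4 * a 10 - a 0 * a 6 * a 9 + a 0 * a 4 * a 11"
definition cc1 :: "(nat \<Rightarrow> 'b::comm_ring_1) \<Rightarrow> 'b" where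
 "cc1 a = a 3*a 6*a 8 - a 3*a 4*a 10 + a 2*a 7*a 8 - a 2*a 5*a 10 - a 1*a 6*a 9 + a 1*a 4*a 11 - a 0*a 7*a 9 + a 0*a 5*a 11"
definition cc2 :: "(nat \<Rightarrow> 'b::comm_ring_1) \<Rightarrow> 'b" where
 "cc2 a = a 3*a 7*a 8 - a 3*a 5*a 10 - a 1*a 7*a 9 + a 1*a 5*a 11"
definition DD :: "(nat \<Rightarrow> 'b::comm_ring_1) \<Rightarrow> 'b" where
 "DD a = cc1 a * cc1 a - 4 * cc0 a * cc2 a"

definition bl0 :: "(nat \<Rightarrow> complex) \<Rightarrow> complex \<Rightarrow> complex \<Rightarrow> complex \<Rightarrow> complex \<Rightarrow> complex" where
  "bl0 a y0 y1 z0 z1 = a 0*y0*z0 + a 1*y0*z1 + a 2*y1*z0 + a 3*y1*z1"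
definition bl1 :: "(nat \<Rightarrow> complex) \<Rightarrow> complex \<Rightarrow> complex \<Rightarrow> complex \<Rightarrow> complex \<Rightarrow> complex" where
  "bl1 a y0 y1 z0 z1 = a 4*y0*z0 + a 5*y0*z1 + a 6*y1*z0 + a 7*y1*z1"
definition bl2 :: "(nat \<Rightarrow> complex) \<Rightarrow> complex \<Rightarrow> complex \<Rightarrow> complex \<Rightarrow> complex \<Rightarrow> complex" where
  "bl2 a y0 y1 z0 z1 = a 8*y0*z0 + a 9*y0*z1 + a 10*y1*z0 + a 11*y1*z1"

definition gg0 :: "(nat \<Rightarrow> complex) \<Rightarrow> complex \<Rightarrow> complex \<Rightarrow> complex" where
  "gg0 a z0 z1 = 2 * cc0 a * z0 + cc1 a * z1"
definition gg1 :: "(nat \<Rightarrow> complex) \<Rightarrow> complex \<Rightarrow> complex \<Rightarrow> complex" where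
  "gg1 a z0 z1 = cc1 a * z0 + 2 * cc2 a * z1"

definition SZ :: "(nat \<Rightarrow> complex) \<Rightarrow> complex \<Rightarrow> complex \<Rightarrow> complex \<Rightarrow> complex \<Rightarrow> complex \<Rightarrow> complex \<Rightarrow> bool" where
  "SZ a x0 x1 y0 y1 z0 z1 \<longleftrightarrow> (x0 \<noteq> 0 \<or> x1 \<noteq> 0) \<and> (y0 \<noteq> 0 \<or> y1 \<noteq> 0) \<and> (z0 \<noteq> 0 \<or> z1 \<noteq> 0) \<and>
     bl0 a y0 y1 z0 z1 = 0 \<and> bl1 a x0 x1 z0 z1 = 0 \<and> bl2 a x0 x1 y0 y1 = 0 \<and>
     (\<exists>u0 u1 v0 v1 w0 w1. bl0 a v0 v1 z0 z1 + bl0 a y0 y1 w0 w1 = 0 \<and>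
        bl1 a u0 u1 z0 z1 + bl1 a x0 x1 w0 w1 = 0 \<and>
        bl2 a u0 u1 y0 y1 + bl2 a x0 x1 v0 v1 = 0 \<and>
        \<not> (\<exists>s t r. u0 = s * x0 \<and> u1 = s * x1 \<and> v0 = t * y0 \<and> v1 = t * y1 \<and> w0 = r * z0 \<and> w1 = r * z1))"

lemma sum2: "(\<Sum>j<(2::nat). f j) = f 0 + f 1"
  by (simp add: numeral_2_eq_2)
lemma bil_0: "bil a 0 p q = bl0 a (p 0) (p 1) (q 0) (q 1)"
  unfolding bil_def sum2 bl0_def by (simp add: algebra_simps eval_nat_numeral)
lemma bil_1: "bil a 1 p q = bl1 a (p 0) (p 1) (q 0) (q 1)"
  unfolding bil_def sum2 bl1_def by (simp add: algebra_simps eval_nat_numeral)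
lemma bil_2: "bil a 2 p q = bl2 a (p 0) (p 1) (q 0) (q 1)"
  unfolding bil_def sum2 bl2_def by (simp add: algebra_simps eval_nat_numeral)

lemma all2: "(\<forall>j<(2::nat). P j) \<longleftrightarrow> P 0 \<and> P 1"
  by (auto simp: less_2_cases_iff)

definition vec2 :: "complex \<Rightarrow> complex \<Rightarrow> nat \<Rightarrow> complex" where
  "vec2 p q = (\<lambda>j. if j = 0 then p else q)"
lemma vec2_simps [simp]: "vec2 p q 0 = p" "vec2 p q 1 = q" "vec2 p q (Suc 0) = q"
  by (simp_all add: vec2_def)

lemma singular_zero_SZ: "singular_zero a x y z \<longleftrightarrow> SZ a (x 0) (x 1) (y 0) (y 1) (z 0) (z 1)"
proof
  assume "singular_zero a x y z"
  then obtain u v w where h: "in_zero_set a x y z" "bil a 0 v z + bil a 0 y w = 0"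
              "bil a 1 u z + bil a 1 x w = 0" "bil a 2 u y + bil a 2 x v = 0"
              "\<not> (\<exists>s t r. \<forall>j<2. u j = s * x j \<and> v j = t * y j \<and> w j = r * z j)"
    unfolding singular_zero_def by blast
  have ne: "\<not> (\<exists>s t r. u 0 = s * x 0 \<and> u 1 = s * x 1 \<and> v 0 = t * y 0 \<and> v 1 = t * y 1 \<and> w 0 = r * z 0 \<and> w 1 = r * z 1)"
    using h(5) unfolding all2 by blast
  show "SZ a (x 0) (x 1) (y 0) (y 1) (z 0) (z 1)"
    unfolding SZ_def
    using h(1-4) ne unfolding in_zero_set_def nonzero2_def bil_0 bil_1 bil_2 by blast
next
  assume "SZ a (x 0) (x 1) (y 0) (y 1) (z 0) (z 1)"
  then obtain u0 u1 v0 v1 w0 w1 where h: "x 0 \<noteq> 0 \<or> x 1 \<noteq> 0" "y 0 \<noteq> 0 \<or> y 1 \<noteq> 0" "z 0 \<noteq> 0 \<or> z 1 \<noteq> 0"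
    "bl0 a (y 0) (y 1) (z 0) (z 1) = 0" "bl1 a (x 0) (x 1) (z 0) (z 1) = 0" "bl2 a (x 0) (x 1) (y 0) (y 1) = 0"
    "bl0 a v0 v1 (z 0) (z 1) + bl0 a (y 0) (y 1) w0 w1 = 0"
    "bl1 a u0 u1 (z 0) (z 1) + bl1 a (x 0) (x 1) w0 w1 = 0"
    "bl2 a u0 u1 (y 0) (y 1) + bl2 a (x 0) (x 1) v0 v1 = 0"
    "\<not> (\<exists>s t r. u0 = s * x 0 \<and> u1 = s * x 1 \<and> v0 = t * y 0 \<and> v1 = t * y 1 \<and> w0 = r * z 0 \<and> w1 = r * z 1)"
    unfolding SZ_def by blast
  have ne: "\<not> (\<exists>s t r. \<forall>j<2. vec2 u0 u1 j = s * x j \<and> vec2 v0 v1 j = t * y j \<and> vec2 w0 w1 j = r * z j)"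
    using h(10) unfolding all2 by (simp, metis)
  have "in_zero_set a x y z"
    unfolding in_zero_set_def nonzero2_def bil_0 bil_1 bil_2 using h(1-6) by blast
  moreover have "bil a 0 (vec2 v0 v1) z + bil a 0 y (vec2 w0 w1) = 0"
     "bil a 1 (vec2 u0 u1) z + bil a 1 x (vec2 w0 w1) = 0"
     "bil a 2 (vec2 u0 u1) y + bil a 2 x (vec2 v0 v1) = 0"
    unfolding bil_0 bil_1 bil_2 using h(7-9) by simp_all
  ultimately show "singular_zero a x y z"
    unfolding singular_zero_def using ne by blast
qed


lemma perp:
  fixes p0 p1 q0 q1 :: complex
  assumes "p0 * q0 + p1 * q1 = 0" "p0 \<noteq> 0 \<or> p1 \<noteq> 0"
  obtains l where "q0 = l * p1" "q1 = - l * p0"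
proof (cases "p0 = 0")
  case True
  then have "p1 \<noteq> 0" "q1 = 0" using assms by auto
  then show ?thesis using that[of "q0 / p1"] True by simp
next
  case False
  have e: "p0 * q0 = - (p1 * q1)" using assms(1) by (simp add: eq_neg_iff_add_eq_0)
  have "(- q1 / p0) * p1 = (p0 * q0) / p0" by (simp add: e algebra_simps)
  also have "\<dots> = q0" using False by simp
  finally have "q0 = (- q1 / p0) * p1" by simp
  then show ?thesis using that[of "- q1 / p0"] False by simp
qed

lemma par:
  fixes z0 z1 w0 w1 :: complex
  assumes "z0 * w1 - z1 * w0 = 0" "z0 \<noteq> 0 \<or> z1 \<noteq> 0"
  obtains r where "w0 = r * z0" "w1 = r * z1"
proof (cases "z0 = 0")
  case True
  then have "z1 \<noteq> 0" "w0 = 0" using assms by auto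
  then show ?thesis using that[of "w1 / z1"] True by simp
next
  case False
  have e: "z0 * w1 = z1 * w0" using assms(1) by simp
  have "(w0 / z0) * z1 = (z1 * w0) / z0" by simp
  also have "\<dots> = (z0 * w1) / z0" using e by simp
  also have "\<dots> = w1" using False by simp
  finally have "w1 = (w0 / z0) * z1" by simp
  then show ?thesis using that[of "w0 / z0"] False by simp
qed

lemma cramer:
  fixes z0 z1 w0 w1 g0 g1 :: complex
  assumes "z0 * w1 - z1 * w0 \<noteq> 0" "z0 * g0 + z1 * g1 = 0" "w0 * g0 + w1 * g1 = 0"
  shows "g0 = 0 \<and> g1 = 0"
proof -
  have "(z0 * w1 - z1 * w0) * g0 = w1 * (z0 * g0 + z1 * g1) - z1 * (w0 * g0 + w1 * g1)"
    by (simp add: algebra_simps)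
  moreover have "(z0 * w1 - z1 * w0) * g1 = z0 * (w0 * g0 + w1 * g1) - w0 * (z0 * g0 + z1 * g1)"
    by (simp add: algebra_simps)
  ultimately show ?thesis using assms by simp
qed

lemma propv:
  fixes u0 u1 x0 x1 p0 p1 k m :: complex
  assumes "u0 = k * p1" "u1 = - k * p0" "x0 = m * p1" "x1 = - m * p0" "m \<noteq> 0"
  shows "u0 = (k / m) * x0 \<and> u1 = (k / m) * x1"
  using assms by simp

lemma gdec0: "gg0 a z0 z1 = bl2 a (a 6) (- a 4) (a 2 * z0 + a 3 * z1) (- (a 0 * z0 + a 1 * z1))
    + bl2 a (a 6 * z0 + a 7 * z1) (- (a 4 * z0 + a 5 * z1)) (a 2) (- a 0)"
  by (simp add: gg0_def cc0_def cc1_def bl2_def algebra_simps)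
lemma gdec1: "gg1 a z0 z1 = bl2 a (a 7) (- a 5) (a 2 * z0 + a 3 * z1) (- (a 0 * z0 + a 1 * z1))
    + bl2 a (a 6 * z0 + a 7 * z1) (- (a 4 * z0 + a 5 * z1)) (a 3) (- a 1)"
  by (simp add: gg1_def cc1_def cc2_def bl2_def algebra_simps)
lemma geul: "z0 * gg0 a z0 z1 + z1 * gg1 a z0 z1 = 2 * bl2 a (a 6 * z0 + a 7 * z1) (- (a 4 * z0 + a 5 * z1)) (a 2 * z0 + a 3 * z1) (- (a 0 * z0 + a 1 * z1))"
  by (simp add: gg0_def gg1_def cc0_def cc1_def cc2_def bl2_def algebra_simps)
lemma gw: "w0 * gg0 a z0 z1 + w1 * gg1 a z0 z1 =
   bl2 a (a 6 * w0 + a 7 * w1) (- (a 4 * w0 + a 5 * w1)) (a 2 * z0 + a 3 * z1) (- (a 0 * z0 + a 1 * z1))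
 + bl2 a (a 6 * z0 + a 7 * z1) (- (a 4 * z0 + a 5 * z1)) (a 2 * w0 + a 3 * w1) (- (a 0 * w0 + a 1 * w1))"
  by (simp add: gg0_def gg1_def cc0_def cc1_def cc2_def bl2_def algebra_simps)




lemma fwd:
  assumes "SZ a x0 x1 y0 y1 z0 z1"
  shows "gg0 a z0 z1 = 0 \<and> gg1 a z0 z1 = 0"
proof -
  obtain u0 u1 v0 v1 w0 w1 where
    xnz: "x0 \<noteq> 0 \<or> x1 \<noteq> 0" and ynz: "y0 \<noteq> 0 \<or> y1 \<noteq> 0" and znz: "z0 \<noteq> 0 \<or> z1 \<noteq> 0" and
    f1: "bl0 a y0 y1 z0 z1 = 0" and f2: "bl1 a x0 x1 z0 z1 = 0" and f3: "bl2 a x0 x1 y0 y1 = 0" and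
    E1: "bl0 a v0 v1 z0 z1 + bl0 a y0 y1 w0 w1 = 0" and
    E2: "bl1 a u0 u1 z0 z1 + bl1 a x0 x1 w0 w1 = 0" and
    E3: "bl2 a u0 u1 y0 y1 + bl2 a x0 x1 v0 v1 = 0" and
    ne: "\<not> (\<exists>s t r. u0 = s * x0 \<and> u1 = s * x1 \<and> v0 = t * y0 \<and> v1 = t * y1 \<and> w0 = r * z0 \<and> w1 = r * z1)"
    using assms unfolding SZ_def by blast
  define P0 where "P0 = a 0 * z0 + a 1 * z1"
  define P1 where "P1 = a 2 * z0 + a 3 * z1"
  define R0 where "R0 = a 4 * z0 + a 5 * z1"
  define R1 where "R1 = a 6 * z0 + a 7 * z1"
  define W0 where "W0 = a 0 * w0 + a 1 * w1"
  define W1 where "W1 = a 2 * w0 + a 3 * w1"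
  define V0 where "V0 = a 4 * w0 + a 5 * w1"
  define V1 where "V1 = a 6 * w0 + a 7 * w1"
  define g0 where "g0 = gg0 a z0 z1"
  define g1 where "g1 = gg1 a z0 z1"
  have f1': "P0 * y0 + P1 * y1 = 0" using f1 by (simp add: bl0_def P0_def P1_def algebra_simps)
  have f2': "R0 * x0 + R1 * x1 = 0" using f2 by (simp add: bl1_def R0_def R1_def algebra_simps)
  have gd0: "g0 = bl2 a (a 6) (- a 4) P1 (- P0) + bl2 a R1 (- R0) (a 2) (- a 0)"
    unfolding g0_def P0_def P1_def R0_def R1_def by (rule gdec0)
  have gd1: "g1 = bl2 a (a 7) (- a 5) P1 (- P0) + bl2 a R1 (- R0) (a 3) (- a 1)"
    unfolding g1_def P0_def P1_def R0_def R1_def by (rule gdec1)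
  have ge: "z0 * g0 + z1 * g1 = 2 * bl2 a R1 (- R0) P1 (- P0)"
    unfolding g0_def g1_def P0_def P1_def R0_def R1_def by (rule geul)
  have gww: "w0 * g0 + w1 * g1 = bl2 a V1 (- V0) P1 (- P0) + bl2 a R1 (- R0) W1 (- W0)"
    unfolding g0_def g1_def P0_def P1_def R0_def R1_def V0_def V1_def W0_def W1_def by (rule gw)
  have E1': "v0 * P0 + v1 * P1 + (y0 * W0 + y1 * W1) = 0"
    using E1 by (simp add: bl0_def P0_def P1_def W0_def W1_def algebra_simps)
  have E2': "u0 * R0 + u1 * R1 + (x0 * V0 + x1 * V1) = 0"
    using E2 by (simp add: bl1_def R0_def R1_def V0_def V1_def algebra_simps)
  consider (A) "(P0 \<noteq> 0 \<or> P1 \<noteq> 0) \<and> (R0 \<noteq> 0 \<or> R1 \<noteq> 0)" | (B) "P0 = 0 \<and> P1 = 0"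
    | (C) "(P0 \<noteq> 0 \<or> P1 \<noteq> 0) \<and> R0 = 0 \<and> R1 = 0" by blast
  then have "g0 = 0 \<and> g1 = 0"
  proof cases
    case A
    obtain lam where y: "y0 = lam * P1" "y1 = - lam * P0" using perp[OF f1'] A by blast
    obtain mu where x: "x0 = mu * R1" "x1 = - mu * R0" using perp[OF f2'] A by blast
    have lam: "lam \<noteq> 0" using ynz y by auto
    have mu: "mu \<noteq> 0" using xnz x by auto
    have "bl2 a x0 x1 y0 y1 = lam * mu * bl2 a R1 (- R0) P1 (- P0)"
      unfolding x y by (simp add: bl2_def algebra_simps)
    then have Qz: "bl2 a R1 (- R0) P1 (- P0) = 0" using f3 lam mu by simp
    show ?thesis
    proof (cases "z0 * w1 - z1 * w0 = 0")
      case True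
      obtain r where r: "w0 = r * z0" "w1 = r * z1" using par[OF True znz] by blast
      have "y0 * W0 + y1 * W1 = r * (P0 * y0 + P1 * y1)"
        unfolding r W0_def W1_def P0_def P1_def by (simp add: algebra_simps)
      then have "P0 * v0 + P1 * v1 = 0" using E1' f1' by (simp add: algebra_simps)
      then obtain ka where v: "v0 = ka * P1" "v1 = - ka * P0" using perp A by blast
      have "x0 * V0 + x1 * V1 = r * (R0 * x0 + R1 * x1)"
        unfolding r V0_def V1_def R0_def R1_def by (simp add: algebra_simps)
      then have "R0 * u0 + R1 * u1 = 0" using E2' f2' by (simp add: algebra_simps)
      then obtain kb where u: "u0 = kb * R1" "u1 = - kb * R0" using perp A by blast
      have "u0 = (kb / mu) * x0 \<and> u1 = (kb / mu) * x1" by (rule propv[OF u x mu])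
      moreover have "v0 = (ka / lam) * y0 \<and> v1 = (ka / lam) * y1" by (rule propv[OF v y lam])
      ultimately have False using ne r by blast
      then show ?thesis ..
    next
      case False
      have "P0 * (v0 - lam * W1) + P1 * (v1 + lam * W0) = 0"
        using E1' unfolding y by (simp add: algebra_simps)
      then obtain ka where v: "v0 - lam * W1 = ka * P1" "v1 + lam * W0 = - ka * P0" using perp A by blast
      have "R0 * (u0 - mu * V1) + R1 * (u1 + mu * V0) = 0"
        using E2' unfolding x by (simp add: algebra_simps)
      then obtain kb where u: "u0 - mu * V1 = kb * R1" "u1 + mu * V0 = - kb * R0" using perp A by blast
      have u': "u0 = kb * R1 + mu * V1" "u1 = - kb * R0 - mu * V0"
        using u by (simp_all add: diff_eq_eq eq_diff_eq)
      have v': "v0 = ka * P1 + lam * W1" "v1 = - ka * P0 - lam * W0"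
        using v by (simp_all add: diff_eq_eq eq_diff_eq)
      have "bl2 a u0 u1 y0 y1 + bl2 a x0 x1 v0 v1 =
         lam * mu * (bl2 a V1 (- V0) P1 (- P0) + bl2 a R1 (- R0) W1 (- W0)) + (kb * lam + ka * mu) * bl2 a R1 (- R0) P1 (- P0)"
        unfolding u' v' x y by (simp add: bl2_def algebra_simps)
      then have "w0 * g0 + w1 * g1 = 0" using E3 Qz lam mu gww by simp
      moreover have "z0 * g0 + z1 * g1 = 0" using ge Qz by simp
      ultimately show ?thesis using cramer False by blast
    qed
  next
    case B
    show ?thesis
    proof (cases "R0 = 0 \<and> R1 = 0")
      case True
      then show ?thesis using gd0 gd1 B by (simp add: bl2_def)
    next
      case False
      obtain mu where x: "x0 = mu * R1" "x1 = - mu * R0" using perp[OF f2'] False by blast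
      have mu: "mu \<noteq> 0" using xnz x by auto
      define p0 where "p0 = a 8 * x0 + a 10 * x1"
      define p1 where "p1 = a 9 * x0 + a 11 * x1"
      have g0B: "g0 = bl2 a R1 (- R0) (a 2) (- a 0)" using gd0 B by (simp add: bl2_def)
      have g1B: "g1 = bl2 a R1 (- R0) (a 3) (- a 1)" using gd1 B by (simp add: bl2_def)
      have gB0: "mu * g0 = p0 * a 2 - p1 * a 0"
        unfolding g0B p0_def p1_def x by (simp add: bl2_def algebra_simps)
      have gB1: "mu * g1 = p0 * a 3 - p1 * a 1"
        unfolding g1B p0_def p1_def x by (simp add: bl2_def algebra_simps)
      show ?thesis
      proof (cases "p0 = 0 \<and> p1 = 0")
        case True
        then show ?thesis using gB0 gB1 mu by simp
      next
        case pnz: False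
        have "p0 * y0 + p1 * y1 = 0" using f3 unfolding p0_def p1_def by (simp add: bl2_def algebra_simps)
        then obtain nu where y: "y0 = nu * p1" "y1 = - nu * p0" using perp pnz by blast
        have nu: "nu \<noteq> 0" using ynz y by auto
        define l0 where "l0 = a 0 * y0 + a 2 * y1"
        define l1 where "l1 = a 1 * y0 + a 3 * y1"
        have lz: "z0 * l0 + z1 * l1 = 0" using f1 unfolding l0_def l1_def by (simp add: bl0_def algebra_simps)
        have lw: "w0 * l0 + w1 * l1 = 0" using E1' B unfolding l0_def l1_def W0_def W1_def by (simp add: algebra_simps)
        show ?thesis
        proof (cases "z0 * w1 - z1 * w0 = 0")
          case True
          obtain r where r: "w0 = r * z0" "w1 = r * z1" using par[OF True znz] by blast
          have "x0 * V0 + x1 * V1 = r * (R0 * x0 + R1 * x1)"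
            unfolding r V0_def V1_def R0_def R1_def by (simp add: algebra_simps)
          then have "R0 * u0 + R1 * u1 = 0" using E2' f2' by (simp add: algebra_simps)
          then obtain kb where u: "u0 = kb * R1" "u1 = - kb * R0" using perp False by blast
          have us: "u0 = (kb / mu) * x0 \<and> u1 = (kb / mu) * x1" by (rule propv[OF u x mu])
          have "bl2 a u0 u1 y0 y1 = (kb / mu) * bl2 a x0 x1 y0 y1"
            using us by (simp add: bl2_def algebra_simps)
          then have "bl2 a x0 x1 v0 v1 = 0" using E3 f3 by simp
          then have "p0 * v0 + p1 * v1 = 0" unfolding p0_def p1_def by (simp add: bl2_def algebra_simps)
          then obtain ka where v: "v0 = ka * p1" "v1 = - ka * p0" using perp pnz by blast
          have "v0 = (ka / nu) * y0 \<and> v1 = (ka / nu) * y1" by (rule propv[OF v y nu])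
          then have False using ne r us by blast
          then show ?thesis ..
        next
          case False
          have "l0 = 0 \<and> l1 = 0" using cramer[OF False lz lw] .
          moreover have "l0 = - nu * (p0 * a 2 - p1 * a 0)" "l1 = - nu * (p0 * a 3 - p1 * a 1)"
            unfolding l0_def l1_def y by (simp_all add: algebra_simps)
          ultimately have "p0 * a 2 - p1 * a 0 = 0" "p0 * a 3 - p1 * a 1 = 0" using nu by simp_all
          then show ?thesis using gB0 gB1 mu by simp
        qed
      qed
    qed
  next
    case C
    obtain lam where y: "y0 = lam * P1" "y1 = - lam * P0" using perp[OF f1'] C by blast
    have lam: "lam \<noteq> 0" using ynz y by auto
    define q0 where "q0 = a 8 * y0 + a 9 * y1"
    define q1 where "q1 = a 10 * y0 + a 11 * y1"
    have g0C: "g0 = bl2 a (a 6) (- a 4) P1 (- P0)" using gd0 C by (simp add: bl2_def)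
    have g1C: "g1 = bl2 a (a 7) (- a 5) P1 (- P0)" using gd1 C by (simp add: bl2_def)
    have gC0: "lam * g0 = a 6 * q0 - a 4 * q1"
      unfolding g0C q0_def q1_def y by (simp add: bl2_def algebra_simps)
    have gC1: "lam * g1 = a 7 * q0 - a 5 * q1"
      unfolding g1C q0_def q1_def y by (simp add: bl2_def algebra_simps)
    show ?thesis
    proof (cases "q0 = 0 \<and> q1 = 0")
      case True
      then show ?thesis using gC0 gC1 lam by simp
    next
      case qnz: False
      have "q0 * x0 + q1 * x1 = 0" using f3 unfolding q0_def q1_def by (simp add: bl2_def algebra_simps)
      then obtain nu where x: "x0 = nu * q1" "x1 = - nu * q0" using perp qnz by blast
      have nu: "nu \<noteq> 0" using xnz x by auto
      define m0 where "m0 = a 4 * x0 + a 6 * x1"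
      define m1 where "m1 = a 5 * x0 + a 7 * x1"
      have mz: "z0 * m0 + z1 * m1 = 0" using f2 unfolding m0_def m1_def by (simp add: bl1_def algebra_simps)
      have mw: "w0 * m0 + w1 * m1 = 0" using E2' C unfolding m0_def m1_def V0_def V1_def by (simp add: algebra_simps)
      show ?thesis
      proof (cases "z0 * w1 - z1 * w0 = 0")
        case True
        obtain r where r: "w0 = r * z0" "w1 = r * z1" using par[OF True znz] by blast
        have "y0 * W0 + y1 * W1 = r * (P0 * y0 + P1 * y1)"
          unfolding r W0_def W1_def P0_def P1_def by (simp add: algebra_simps)
        then have "P0 * v0 + P1 * v1 = 0" using E1' f1' by (simp add: algebra_simps)
        then obtain ka where v: "v0 = ka * P1" "v1 = - ka * P0" using perp C by blast
        have vs: "v0 = (ka / lam) * y0 \<and> v1 = (ka / lam) * y1" by (rule propv[OF v y lam])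
        have "bl2 a x0 x1 v0 v1 = (ka / lam) * bl2 a x0 x1 y0 y1"
          using vs by (simp add: bl2_def algebra_simps)
        then have "bl2 a u0 u1 y0 y1 = 0" using E3 f3 by simp
        then have "q0 * u0 + q1 * u1 = 0" unfolding q0_def q1_def by (simp add: bl2_def algebra_simps)
        then obtain kb where u: "u0 = kb * q1" "u1 = - kb * q0" using perp qnz by blast
        have "u0 = (kb / nu) * x0 \<and> u1 = (kb / nu) * x1" by (rule propv[OF u x nu])
        then have False using ne r vs by blast
        then show ?thesis ..
      next
        case False
        have "m0 = 0 \<and> m1 = 0" using cramer[OF False mz mw] .
        moreover have "m0 = - nu * (a 6 * q0 - a 4 * q1)" "m1 = - nu * (a 7 * q0 - a 5 * q1)"
          unfolding m0_def m1_def x by (simp_all add: algebra_simps)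
        ultimately have "a 6 * q0 - a 4 * q1 = 0" "a 7 * q0 - a 5 * q1 = 0" using nu by simp_all
        then show ?thesis using gC0 gC1 lam by simp
      qed
    qed
  qed
  then show ?thesis unfolding g0_def g1_def .
qed



lemma nzc:
  fixes p0 p1 :: complex
  assumes "p0 \<noteq> 0 \<or> p1 \<noteq> 0"
  shows "p0 * cnj p0 + p1 * cnj p1 \<noteq> 0"
proof -
  have e: "p0 * cnj p0 + p1 * cnj p1 = complex_of_real ((cmod p0)^2 + (cmod p1)^2)"
    by (simp only: of_real_add complex_norm_square)
  have "(cmod p0)^2 + (cmod p1)^2 > 0"
  proof (cases "p0 = 0")
    case True
    then have "(cmod p1)^2 > 0" using assms by simp
    then show ?thesis using True by simp
  next
    case False
    then have "(cmod p0)^2 > 0" by simp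
    then show ?thesis by (simp add: add_pos_nonneg)
  qed
  then show ?thesis unfolding e by (metis less_irrefl of_real_eq_0_iff)
qed

lemma SZI:
  fixes a x0 x1 y0 y1 z0 z1 uA uB vA vB wA wB
  assumes "x0 \<noteq> 0 \<or> x1 \<noteq> 0" "y0 \<noteq> 0 \<or> y1 \<noteq> 0" "z0 \<noteq> 0 \<or> z1 \<noteq> 0"
    "bl0 a y0 y1 z0 z1 = 0" "bl1 a x0 x1 z0 z1 = 0" "bl2 a x0 x1 y0 y1 = 0"
    "bl0 a vA vB z0 z1 + bl0 a y0 y1 wA wB = 0"
    "bl1 a uA uB z0 z1 + bl1 a x0 x1 wA wB = 0"
    "bl2 a uA uB y0 y1 + bl2 a x0 x1 vA vB = 0"
    "\<not> (\<exists>s t r. uA = s * x0 \<and> uB = s * x1 \<and> vA = t * y0 \<and> vB = t * y1 \<and> wA = r * z0 \<and> wB = r * z1)"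
  shows "SZ a x0 x1 y0 y1 z0 z1"
  unfolding SZ_def using assms by blast

lemma neW:
  fixes z0 z1 w0 w1 :: complex
  assumes "z0 * w1 - z1 * w0 \<noteq> 0"
  shows "\<not> (\<exists>s t r. u0 = s * x0 \<and> u1 = s * x1 \<and> v0 = t * y0 \<and> v1 = t * y1 \<and> w0 = r * z0 \<and> w1 = r * z1)"
  using assms by (auto simp: algebra_simps)

lemma bwd:
  assumes znz: "z0 \<noteq> 0 \<or> z1 \<noteq> 0" and g: "gg0 a z0 z1 = 0" "gg1 a z0 z1 = 0"
  shows "\<exists>x0 x1 y0 y1. SZ a x0 x1 y0 y1 z0 z1"
proof -
  define w0 where "w0 = cnj z1"
  define w1 where "w1 = - cnj z0"
  define P0 where "P0 = a 0 * z0 + a 1 * z1"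
  define P1 where "P1 = a 2 * z0 + a 3 * z1"
  define R0 where "R0 = a 4 * z0 + a 5 * z1"
  define R1 where "R1 = a 6 * z0 + a 7 * z1"
  define W0 where "W0 = a 0 * w0 + a 1 * w1"
  define W1 where "W1 = a 2 * w0 + a 3 * w1"
  define V0 where "V0 = a 4 * w0 + a 5 * w1"
  define V1 where "V1 = a 6 * w0 + a 7 * w1"
  have det: "z0 * w1 - z1 * w0 \<noteq> 0"
  proof -
    have "z0 * w1 - z1 * w0 = - (z0 * cnj z0 + z1 * cnj z1)" unfolding w0_def w1_def by (simp add: algebra_simps)
    then show ?thesis using nzc[OF znz] by (metis neg_equal_0_iff_equal)
  qed
  have ne: "\<not> (\<exists>s t r. u0 = s * x0 \<and> u1 = s * x1 \<and> v0 = t * y0 \<and> v1 = t * y1 \<and> w0 = r * z0 \<and> w1 = r * z1)"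
    for u0 u1 v0 v1 x0 x1 y0 y1 :: complex using neW[OF det] by blast
  have Qz: "bl2 a R1 (- R0) P1 (- P0) = 0"
    using geul[of z0 a z1] g unfolding P0_def P1_def R0_def R1_def by simp
  have Gw: "bl2 a V1 (- V0) P1 (- P0) + bl2 a R1 (- R0) W1 (- W0) = 0"
    using gw[of w0 a z0 z1 w1] g unfolding P0_def P1_def R0_def R1_def V0_def V1_def W0_def W1_def by simp
  have b0: "bl0 a v0 v1 z0 z1 = v0 * P0 + v1 * P1" for v0 v1
    unfolding bl0_def P0_def P1_def by (simp add: algebra_simps)
  have b0w: "bl0 a v0 v1 w0 w1 = v0 * W0 + v1 * W1" for v0 v1
    unfolding bl0_def W0_def W1_def by (simp add: algebra_simps)
  have b1: "bl1 a v0 v1 z0 z1 = v0 * R0 + v1 * R1" for v0 v1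
    unfolding bl1_def R0_def R1_def by (simp add: algebra_simps)
  have b1w: "bl1 a v0 v1 w0 w1 = v0 * V0 + v1 * V1" for v0 v1
    unfolding bl1_def V0_def V1_def by (simp add: algebra_simps)
  consider (A) "(P0 \<noteq> 0 \<or> P1 \<noteq> 0) \<and> (R0 \<noteq> 0 \<or> R1 \<noteq> 0)" | (B) "P0 = 0 \<and> P1 = 0 \<and> (R0 \<noteq> 0 \<or> R1 \<noteq> 0)"
    | (C) "(P0 \<noteq> 0 \<or> P1 \<noteq> 0) \<and> R0 = 0 \<and> R1 = 0" | (D) "P0 = 0 \<and> P1 = 0 \<and> R0 = 0 \<and> R1 = 0" by blast
  then show ?thesis
  proof cases
    case A
    have "SZ a R1 (- R0) P1 (- P0) z0 z1"
    proof (rule SZI[where uA = V1 and uB = "- V0" and vA = W1 and vB = "- W0" and wA = w0 and wB = w1])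
      show "R1 \<noteq> 0 \<or> - R0 \<noteq> 0" "P1 \<noteq> 0 \<or> - P0 \<noteq> 0" using A by auto
      show "z0 \<noteq> 0 \<or> z1 \<noteq> 0" by (rule znz)
      show "bl0 a P1 (- P0) z0 z1 = 0" unfolding b0 by (simp add: algebra_simps)
      show "bl1 a R1 (- R0) z0 z1 = 0" unfolding b1 by (simp add: algebra_simps)
      show "bl2 a R1 (- R0) P1 (- P0) = 0" by (rule Qz)
      show "bl0 a W1 (- W0) z0 z1 + bl0 a P1 (- P0) w0 w1 = 0" unfolding b0 b0w by (simp add: algebra_simps)
      show "bl1 a V1 (- V0) z0 z1 + bl1 a R1 (- R0) w0 w1 = 0" unfolding b1 b1w by (simp add: algebra_simps)
      show "bl2 a V1 (- V0) P1 (- P0) + bl2 a R1 (- R0) W1 (- W0) = 0" by (rule Gw)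
      show "\<not> (\<exists>s t r. V1 = s * R1 \<and> - V0 = s * - R0 \<and> W1 = t * P1 \<and> - W0 = t * - P0 \<and> w0 = r * z0 \<and> w1 = r * z1)"
        by (rule ne)
    qed
    then show ?thesis by blast
  next
    case B
    define p0 where "p0 = a 8 * R1 - a 10 * R0"
    define p1 where "p1 = a 9 * R1 - a 11 * R0"
    have b2: "bl2 a R1 (- R0) y0 y1 = p0 * y0 + p1 * y1" for y0 y1
      unfolding bl2_def p0_def p1_def by (simp add: algebra_simps)
    show ?thesis
    proof (cases "p0 = 0 \<and> p1 = 0")
      case True
      have "SZ a R1 (- R0) 1 0 z0 z1"
      proof (rule SZI[where uA = 0 and uB = 0 and vA = 0 and vB = 1 and wA = 0 and wB = 0])
        show "R1 \<noteq> 0 \<or> - R0 \<noteq> 0" using B by auto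
        show "(1::complex) \<noteq> 0 \<or> (0::complex) \<noteq> 0" by simp
        show "z0 \<noteq> 0 \<or> z1 \<noteq> 0" by (rule znz)
        show "bl0 a 1 0 z0 z1 = 0" unfolding b0 using B by simp
        show "bl1 a R1 (- R0) z0 z1 = 0" unfolding b1 by (simp add: algebra_simps)
        show "bl2 a R1 (- R0) 1 0 = 0" unfolding b2 using True by simp
        show "bl0 a 0 1 z0 z1 + bl0 a 1 0 0 0 = 0" unfolding b0 using B by (simp add: bl0_def)
        show "bl1 a 0 0 z0 z1 + bl1 a R1 (- R0) 0 0 = 0" by (simp add: bl1_def)
        show "bl2 a 0 0 1 0 + bl2 a R1 (- R0) 0 1 = 0" unfolding b2 using True by (simp add: bl2_def)
        show "\<not> (\<exists>(s::complex) (t::complex) (r::complex). 0 = s * R1 \<and> 0 = s * - R0 \<and> 0 = t * 1 \<and> 1 = t * 0 \<and> 0 = r * z0 \<and> 0 = r * z1)"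
          by auto
      qed
      then show ?thesis by blast
    next
      case pnz: False
      define N where "N = p0 * cnj p0 + p1 * cnj p1"
      have N: "N \<noteq> 0" unfolding N_def using nzc pnz by blast
      define ka where "ka = - bl2 a V1 (- V0) p1 (- p0) / N"
      have "SZ a R1 (- R0) p1 (- p0) z0 z1"
      proof (rule SZI[where uA = V1 and uB = "- V0" and vA = "ka * cnj p0" and vB = "ka * cnj p1" and wA = w0 and wB = w1])
        show "R1 \<noteq> 0 \<or> - R0 \<noteq> 0" using B by auto
        show "p1 \<noteq> 0 \<or> - p0 \<noteq> 0" using pnz by auto
        show "z0 \<noteq> 0 \<or> z1 \<noteq> 0" by (rule znz)
        show "bl0 a p1 (- p0) z0 z1 = 0" unfolding b0 using B by simp
        show "bl1 a R1 (- R0) z0 z1 = 0" unfolding b1 by (simp add: algebra_simps)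
        show "bl2 a R1 (- R0) p1 (- p0) = 0" unfolding b2 by (simp add: algebra_simps)
        have "bl2 a R1 (- R0) W1 (- W0) = 0" using Gw B by (simp add: bl2_def)
        then show "bl0 a (ka * cnj p0) (ka * cnj p1) z0 z1 + bl0 a p1 (- p0) w0 w1 = 0"
          unfolding b0 b0w b2 using B by (simp add: algebra_simps)
        show "bl1 a V1 (- V0) z0 z1 + bl1 a R1 (- R0) w0 w1 = 0" unfolding b1 b1w by (simp add: algebra_simps)
        have "bl2 a R1 (- R0) (ka * cnj p0) (ka * cnj p1) = ka * N" unfolding b2 N_def by (simp add: algebra_simps)
        then show "bl2 a V1 (- V0) p1 (- p0) + bl2 a R1 (- R0) (ka * cnj p0) (ka * cnj p1) = 0"
          unfolding ka_def using N by simp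
        show "\<not> (\<exists>s t r. V1 = s * R1 \<and> - V0 = s * - R0 \<and> ka * cnj p0 = t * p1 \<and> ka * cnj p1 = t * - p0 \<and> w0 = r * z0 \<and> w1 = r * z1)"
          by (rule ne)
      qed
      then show ?thesis by blast
    qed
  next
    case C
    define q0 where "q0 = a 8 * P1 - a 9 * P0"
    define q1 where "q1 = a 10 * P1 - a 11 * P0"
    have b2: "bl2 a x0 x1 P1 (- P0) = x0 * q0 + x1 * q1" for x0 x1
      unfolding bl2_def q0_def q1_def by (simp add: algebra_simps)
    show ?thesis
    proof (cases "q0 = 0 \<and> q1 = 0")
      case True
      have "SZ a 1 0 P1 (- P0) z0 z1"
      proof (rule SZI[where uA = 0 and uB = 1 and vA = 0 and vB = 0 and wA = 0 and wB = 0])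
        show "(1::complex) \<noteq> 0 \<or> (0::complex) \<noteq> 0" by simp
        show "P1 \<noteq> 0 \<or> - P0 \<noteq> 0" using C by auto
        show "z0 \<noteq> 0 \<or> z1 \<noteq> 0" by (rule znz)
        show "bl0 a P1 (- P0) z0 z1 = 0" unfolding b0 by (simp add: algebra_simps)
        show "bl1 a 1 0 z0 z1 = 0" unfolding b1 using C by simp
        show "bl2 a 1 0 P1 (- P0) = 0" unfolding b2 using True by simp
        show "bl0 a 0 0 z0 z1 + bl0 a P1 (- P0) 0 0 = 0" by (simp add: bl0_def)
        show "bl1 a 0 1 z0 z1 + bl1 a 1 0 0 0 = 0" unfolding b1 using C by (simp add: bl1_def)
        show "bl2 a 0 1 P1 (- P0) + bl2 a 1 0 0 0 = 0" unfolding b2 using True by (simp add: bl2_def)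
        show "\<not> (\<exists>(s::complex) (t::complex) (r::complex). 0 = s * 1 \<and> 1 = s * 0 \<and> 0 = t * P1 \<and> 0 = t * - P0 \<and> 0 = r * z0 \<and> 0 = r * z1)"
          by auto
      qed
      then show ?thesis by blast
    next
      case qnz: False
      define N where "N = q0 * cnj q0 + q1 * cnj q1"
      have N: "N \<noteq> 0" unfolding N_def using nzc qnz by blast
      define ka where "ka = - bl2 a q1 (- q0) W1 (- W0) / N"
      have "SZ a q1 (- q0) P1 (- P0) z0 z1"
      proof (rule SZI[where uA = "ka * cnj q0" and uB = "ka * cnj q1" and vA = W1 and vB = "- W0" and wA = w0 and wB = w1])
        show "q1 \<noteq> 0 \<or> - q0 \<noteq> 0" using qnz by auto
        show "P1 \<noteq> 0 \<or> - P0 \<noteq> 0" using C by auto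
        show "z0 \<noteq> 0 \<or> z1 \<noteq> 0" by (rule znz)
        show "bl0 a P1 (- P0) z0 z1 = 0" unfolding b0 by (simp add: algebra_simps)
        show "bl1 a q1 (- q0) z0 z1 = 0" unfolding b1 using C by simp
        show "bl2 a q1 (- q0) P1 (- P0) = 0" unfolding b2 by (simp add: algebra_simps)
        show "bl0 a W1 (- W0) z0 z1 + bl0 a P1 (- P0) w0 w1 = 0" unfolding b0 b0w by (simp add: algebra_simps)
        have "bl2 a V1 (- V0) P1 (- P0) = 0" using Gw C by (simp add: bl2_def)
        then show "bl1 a (ka * cnj q0) (ka * cnj q1) z0 z1 + bl1 a q1 (- q0) w0 w1 = 0"
          unfolding b1 b1w b2 using C by (simp add: algebra_simps)
        have "bl2 a (ka * cnj q0) (ka * cnj q1) P1 (- P0) = ka * N" unfolding b2 N_def by (simp add: algebra_simps)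
        then show "bl2 a (ka * cnj q0) (ka * cnj q1) P1 (- P0) + bl2 a q1 (- q0) W1 (- W0) = 0"
          unfolding ka_def using N by simp
        show "\<not> (\<exists>s t r. ka * cnj q0 = s * q1 \<and> ka * cnj q1 = s * - q0 \<and> W1 = t * P1 \<and> - W0 = t * - P0 \<and> w0 = r * z0 \<and> w1 = r * z1)"
          by (rule ne)
      qed
      then show ?thesis by blast
    qed
  next
    case D
    show ?thesis
    proof (cases "a 8 = 0 \<and> a 9 = 0")
      case True
      have "SZ a 1 0 1 0 z0 z1"
      proof (rule SZI[where uA = 0 and uB = 0 and vA = 0 and vB = 1 and wA = 0 and wB = 0])
        show "(1::complex) \<noteq> 0 \<or> (0::complex) \<noteq> 0" by simp
        show "(1::complex) \<noteq> 0 \<or> (0::complex) \<noteq> 0" by simp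
        show "z0 \<noteq> 0 \<or> z1 \<noteq> 0" by (rule znz)
        show "bl0 a 1 0 z0 z1 = 0" unfolding b0 using D by simp
        show "bl1 a 1 0 z0 z1 = 0" unfolding b1 using D by simp
        show "bl2 a 1 0 1 0 = 0" using True by (simp add: bl2_def)
        show "bl0 a 0 1 z0 z1 + bl0 a 1 0 0 0 = 0" unfolding b0 using D by (simp add: bl0_def)
        show "bl1 a 0 0 z0 z1 + bl1 a 1 0 0 0 = 0" by (simp add: bl1_def)
        show "bl2 a 0 0 1 0 + bl2 a 1 0 0 1 = 0" using True by (simp add: bl2_def)
        show "\<not> (\<exists>(s::complex) (t::complex) (r::complex). 0 = s * 1 \<and> 0 = s * 0 \<and> 0 = t * 1 \<and> 1 = t * 0 \<and> 0 = r * z0 \<and> 0 = r * z1)"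
          by auto
      qed
      then show ?thesis by blast
    next
      case pnz: False
      define N where "N = a 8 * cnj (a 8) + a 9 * cnj (a 9)"
      have N: "N \<noteq> 0" unfolding N_def using nzc pnz by blast
      define ka where "ka = - bl2 a 0 1 (a 9) (- a 8) / N"
      have "SZ a 1 0 (a 9) (- a 8) z0 z1"
      proof (rule SZI[where uA = 0 and uB = 1 and vA = "ka * cnj (a 8)" and vB = "ka * cnj (a 9)" and wA = 0 and wB = 0])
        show "(1::complex) \<noteq> 0 \<or> (0::complex) \<noteq> 0" by simp
        show "a 9 \<noteq> 0 \<or> - a 8 \<noteq> 0" using pnz by auto
        show "z0 \<noteq> 0 \<or> z1 \<noteq> 0" by (rule znz)
        show "bl0 a (a 9) (- a 8) z0 z1 = 0" unfolding b0 using D by simp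
        show "bl1 a 1 0 z0 z1 = 0" unfolding b1 using D by simp
        show "bl2 a 1 0 (a 9) (- a 8) = 0" by (simp add: bl2_def algebra_simps)
        show "bl0 a (ka * cnj (a 8)) (ka * cnj (a 9)) z0 z1 + bl0 a (a 9) (- a 8) 0 0 = 0"
          unfolding b0 using D by (simp add: bl0_def)
        show "bl1 a 0 1 z0 z1 + bl1 a 1 0 0 0 = 0" unfolding b1 using D by (simp add: bl1_def)
        have "bl2 a 1 0 (ka * cnj (a 8)) (ka * cnj (a 9)) = ka * N" unfolding N_def by (simp add: bl2_def algebra_simps)
        then show "bl2 a 0 1 (a 9) (- a 8) + bl2 a 1 0 (ka * cnj (a 8)) (ka * cnj (a 9)) = 0"
          unfolding ka_def using N by simp
        show "\<not> (\<exists>(s::complex) (t::complex) (r::complex). 0 = s * 1 \<and> 1 = s * 0 \<and> ka * cnj (a 8) = t * a 9 \<and> ka * cnj (a 9) = t * - a 8 \<and> 0 = r * z0 \<and> 0 = r * z1)"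
          by auto
      qed
      then show ?thesis by blast
    qed
  qed
qed




definition rhom :: "('a::comm_ring_1 \<Rightarrow> 'b::comm_ring_1) \<Rightarrow> bool" where
  "rhom f \<longleftrightarrow> (\<forall>x y. f (x + y) = f x + f y) \<and> (\<forall>x y. f (x * y) = f x * f y) \<and> f 1 = 1"

lemma rhom_add: "rhom f \<Longrightarrow> f (x + y) = f x + f y" by (simp add: rhom_def)
lemma rhom_mult: "rhom f \<Longrightarrow> f (x * y) = f x * f y" by (simp add: rhom_def)
lemma rhom_one: "rhom f \<Longrightarrow> f 1 = 1" by (simp add: rhom_def)
lemma rhom_zero: assumes "rhom f" shows "f 0 = 0"
proof -
  have "f 0 = f 0 + f 0" using rhom_add[OF assms, of 0 0] by simp
  then show ?thesis by simp
qed
lemma rhom_minus: assumes "rhom f" shows "f (- x) = - f x"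
proof -
  have "f x + f (- x) = 0" using rhom_add[OF assms, of x "- x"] rhom_zero[OF assms] by simp
  then show ?thesis by (simp add: eq_neg_iff_add_eq_0 add.commute)
qed
lemma rhom_diff: "rhom f \<Longrightarrow> f (x - y) = f x - f y"
  using rhom_add[of f x "- y"] rhom_minus[of f y] by simp
lemma rhom_sum: "rhom f \<Longrightarrow> f (sum g A) = (\<Sum>a\<in>A. f (g a))"
  by (induction A rule: infinite_finite_induct) (simp_all add: rhom_zero rhom_add)
lemma rhom_power: "rhom f \<Longrightarrow> f (x ^ n) = f x ^ n"
  by (induction n) (simp_all add: rhom_one rhom_mult)
lemma rhom_prod: "rhom f \<Longrightarrow> f (prod g A) = (\<Prod>a\<in>A. f (g a))"
  by (induction A rule: infinite_finite_induct) (simp_all add: rhom_one rhom_mult)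
lemma rhom_of_nat: "rhom f \<Longrightarrow> f (of_nat n) = of_nat n"
  by (induction n) (simp_all add: rhom_zero rhom_one rhom_add)
lemma rhom_numeral: "rhom f \<Longrightarrow> f (numeral n) = numeral n"
  using rhom_of_nat[of f "numeral n"] by simp

definition monev :: "(nat \<Rightarrow> 'b::comm_ring_1) \<Rightarrow> (nat \<Rightarrow>\<^sub>0 nat) \<Rightarrow> 'b" where
  "monev v m = (\<Prod>i\<in>Poly_Mapping.keys m. v i ^ Poly_Mapping.lookup m i)"

definition gev :: "(complex \<Rightarrow> 'b::comm_ring_1) \<Rightarrow> (nat \<Rightarrow> 'b) \<Rightarrow> cmpoly \<Rightarrow> 'b" where
  "gev h v p = (\<Sum>m\<in>Poly_Mapping.keys p. h (Poly_Mapping.lookup p m) * monev v m)"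

lemma monev_superset:
  assumes "finite S" "Poly_Mapping.keys m \<subseteq> S"
  shows "monev v m = (\<Prod>i\<in>S. v i ^ Poly_Mapping.lookup m i)"
  unfolding monev_def
  by (rule prod.mono_neutral_left[OF assms]) (simp add: in_keys_iff)

lemma monev_add: "monev v (m + n) = monev v m * monev v n"
proof -
  let ?S = "Poly_Mapping.keys m \<union> Poly_Mapping.keys n"
  have f: "finite ?S" by simp
  have "monev v (m + n) = (\<Prod>i\<in>?S. v i ^ Poly_Mapping.lookup (m + n) i)"
    by (rule monev_superset[OF f]) (fact keys_add)
  also have "\<dots> = (\<Prod>i\<in>?S. v i ^ Poly_Mapping.lookup m i * v i ^ Poly_Mapping.lookup n i)"
    by (simp only: lookup_add power_add)
  also have "\<dots> = (\<Prod>i\<in>?S. v i ^ Poly_Mapping.lookup m i) * (\<Prod>i\<in>?S. v i ^ Poly_Mapping.lookup n i)"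
    by (rule prod.distrib)
  also have "\<dots> = monev v m * monev v n"
  proof -
    have e1: "monev v m = (\<Prod>i\<in>?S. v i ^ Poly_Mapping.lookup m i)"
      by (rule monev_superset[OF f]) simp
    have e2: "monev v n = (\<Prod>i\<in>?S. v i ^ Poly_Mapping.lookup n i)"
      by (rule monev_superset[OF f]) simp
    show ?thesis unfolding e1 e2 ..
  qed
  finally show ?thesis .
qed

lemma monev_zero [simp]: "monev v 0 = 1"
  by (simp add: monev_def)

lemma gev_superset:
  assumes "rhom h" "finite S" "Poly_Mapping.keys p \<subseteq> S"
  shows "gev h v p = (\<Sum>m\<in>S. h (Poly_Mapping.lookup p m) * monev v m)"
  unfolding gev_def
  by (rule sum.mono_neutral_left[OF assms(2,3)]) (simp add: in_keys_iff rhom_zero[OF assms(1)])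

lemma gev_add: assumes "rhom h" shows "gev h v (p + q) = gev h v p + gev h v q"
proof -
  let ?S = "Poly_Mapping.keys p \<union> Poly_Mapping.keys q"
  have f: "finite ?S" by simp
  have "gev h v (p + q) = (\<Sum>m\<in>?S. h (Poly_Mapping.lookup (p + q) m) * monev v m)"
    by (rule gev_superset[OF assms f]) (fact keys_add)
  also have "\<dots> = (\<Sum>m\<in>?S. h (Poly_Mapping.lookup p m) * monev v m + h (Poly_Mapping.lookup q m) * monev v m)"
    by (rule sum.cong) (simp_all only: lookup_add rhom_add[OF assms] distrib_right)
  also have "\<dots> = (\<Sum>m\<in>?S. h (Poly_Mapping.lookup p m) * monev v m) + (\<Sum>m\<in>?S. h (Poly_Mapping.lookup q m) * monev v m)"
    by (rule sum.distrib)
  also have "\<dots> = gev h v p + gev h v q"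
  proof -
    have e1: "gev h v p = (\<Sum>m\<in>?S. h (Poly_Mapping.lookup p m) * monev v m)"
      by (rule gev_superset[OF assms f]) simp
    have e2: "gev h v q = (\<Sum>m\<in>?S. h (Poly_Mapping.lookup q m) * monev v m)"
      by (rule gev_superset[OF assms f]) simp
    show ?thesis unfolding e1 e2 ..
  qed
  finally show ?thesis .
qed

lemma gev_zero [simp]: "gev h v 0 = 0"
  by (simp add: gev_def)

lemma gev_single: assumes "rhom h" shows "gev h v (Poly_Mapping.single m c) = h c * monev v m"
  by (cases "c = 0") (simp_all add: gev_def rhom_zero[OF assms])

lemma gev_sum: assumes "rhom h" shows "gev h v (sum f A) = (\<Sum>a\<in>A. gev h v (f a))"
  by (induction A rule: infinite_finite_induct) (simp_all add: gev_add[OF assms])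

lemma pm_expand: "p = (\<Sum>m\<in>Poly_Mapping.keys p. Poly_Mapping.single m (Poly_Mapping.lookup p m))"
proof (rule poly_mapping_eqI)
  fix k
  have "Poly_Mapping.lookup (\<Sum>m\<in>Poly_Mapping.keys p. Poly_Mapping.single m (Poly_Mapping.lookup p m)) k
      = (\<Sum>m\<in>Poly_Mapping.keys p. (if m = k then Poly_Mapping.lookup p m else 0))"
    by (simp add: lookup_sum lookup_single when_def)
  also have "\<dots> = Poly_Mapping.lookup p k"
    by (simp add: in_keys_iff)
  finally show "Poly_Mapping.lookup p k = Poly_Mapping.lookup (\<Sum>m\<in>Poly_Mapping.keys p. Poly_Mapping.single m (Poly_Mapping.lookup p m)) k"
    by simp
qed

lemma gev_mult: assumes "rhom h" shows "gev h v (p * q) = gev h v p * gev h v q"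
proof -
  let ?lp = "Poly_Mapping.lookup p" and ?lq = "Poly_Mapping.lookup q"
  have "p * q = (\<Sum>m\<in>Poly_Mapping.keys p. Poly_Mapping.single m (?lp m)) * (\<Sum>n\<in>Poly_Mapping.keys q. Poly_Mapping.single n (?lq n))"
    using pm_expand[of p] pm_expand[of q] by simp
  also have "\<dots> = (\<Sum>m\<in>Poly_Mapping.keys p. \<Sum>n\<in>Poly_Mapping.keys q. Poly_Mapping.single (m + n) (?lp m * ?lq n))"
    apply (simp add: sum_distrib_left sum_distrib_right mult_single)
    by (rule sum.swap)
  finally have e: "p * q = \<dots>" .
  have "gev h v (p * q) = (\<Sum>m\<in>Poly_Mapping.keys p. \<Sum>n\<in>Poly_Mapping.keys q. h (?lp m * ?lq n) * monev v (m + n))"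
    unfolding e by (simp add: gev_sum[OF assms] gev_single[OF assms])
  also have "\<dots> = (\<Sum>m\<in>Poly_Mapping.keys p. \<Sum>n\<in>Poly_Mapping.keys q. (h (?lp m) * monev v m) * (h (?lq n) * monev v n))"
    by (simp add: rhom_mult[OF assms] monev_add mult_ac)
  also have "\<dots> = gev h v p * gev h v q"
    by (simp add: gev_def sum_product)
  finally show ?thesis .
qed

lemma gev_one: assumes "rhom h" shows "gev h v 1 = 1"
  using gev_single[OF assms, of v 0 1] by (simp add: rhom_one[OF assms])

lemma gev_minus: assumes "rhom h" shows "gev h v (- p) = - gev h v p"
proof -
  have "gev h v (- p) + gev h v p = 0" using gev_add[OF assms, of v "- p" p] by simp
  then show ?thesis by (simp add: eq_neg_iff_add_eq_0)
qed

lemma gev_diff: assumes "rhom h" shows "gev h v (p - q) = gev h v p - gev h v q"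
  using gev_add[OF assms, of v p "- q"] gev_minus[OF assms, of v q] by simp

lemma gev_numeral: assumes "rhom h" shows "gev h v (numeral n) = numeral n"
  using gev_single[OF assms, of v 0 "numeral n"] by (simp add: rhom_numeral[OF assms])

definition Xv :: "nat \<Rightarrow> cmpoly" where "Xv i = Poly_Mapping.single (Poly_Mapping.single i 1) 1"

lemma monev_single1: "monev v (Poly_Mapping.single i 1) = v i"
  by (simp add: monev_def)

lemma gev_X: assumes "rhom h" shows "gev h v (Xv i) = v i"
  unfolding Xv_def gev_single[OF assms] rhom_one[OF assms] monev_single1 by simp

lemma gev_nat:
  assumes "rhom h" "rhom f"
  shows "f (gev h v p) = gev (f \<circ> h) (f \<circ> v) p"
  by (simp add: gev_def monev_def rhom_sum[OF assms(2)] rhom_mult[OF assms(2)] rhom_prod[OF assms(2)] rhom_power[OF assms(2)])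

lemma rhom_comp: "rhom h \<Longrightarrow> rhom f \<Longrightarrow> rhom (f \<circ> h)"
  by (simp add: rhom_def)

lemma gev_DD: assumes "rhom h" shows "gev h v (DD Xv) = DD v"
  unfolding DD_def cc0_def cc1_def cc2_def
  by (simp add: gev_add[OF assms] gev_diff[OF assms] gev_mult[OF assms] gev_numeral[OF assms] gev_X[OF assms])

lemma rhom_id: "rhom (\<lambda>c::complex. c)" by (simp add: rhom_def)

lemma mp_eval_gev: "mp_eval p a = gev (\<lambda>c. c) a p"
  by (simp add: mp_eval_def gev_def mon_eval_def monev_def)



lemma DD_iff: "DD a = 0 \<longleftrightarrow> (\<exists>z0 z1. (z0 \<noteq> 0 \<or> z1 \<noteq> 0) \<and> gg0 a z0 z1 = 0 \<and> gg1 a z0 z1 = 0)"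
proof
  assume D: "DD a = 0"
  show "\<exists>z0 z1. (z0 \<noteq> 0 \<or> z1 \<noteq> 0) \<and> gg0 a z0 z1 = 0 \<and> gg1 a z0 z1 = 0"
  proof (cases "cc0 a = 0 \<and> cc1 a = 0")
    case True
    then show ?thesis by (intro exI[of _ 1] exI[of _ 0]) (simp add: gg0_def gg1_def)
  next
    case False
    have "cc1 a \<noteq> 0 \<or> - 2 * cc0 a \<noteq> 0" using False by auto
    moreover have "gg0 a (cc1 a) (- 2 * cc0 a) = 0" by (simp add: gg0_def algebra_simps)
    moreover have "gg1 a (cc1 a) (- 2 * cc0 a) = 0" using D by (simp add: gg1_def DD_def algebra_simps)
    ultimately show ?thesis by blast
  qed
next
  assume "\<exists>z0 z1. (z0 \<noteq> 0 \<or> z1 \<noteq> 0) \<and> gg0 a z0 z1 = 0 \<and> gg1 a z0 z1 = 0"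
  then obtain z0 z1 where z: "z0 \<noteq> 0 \<or> z1 \<noteq> 0" and g: "gg0 a z0 z1 = 0" "gg1 a z0 z1 = 0" by blast
  have "- DD a * z0 = 2 * cc2 a * gg0 a z0 z1 - cc1 a * gg1 a z0 z1"
    by (simp add: DD_def gg0_def gg1_def algebra_simps)
  moreover have "- DD a * z1 = 2 * cc0 a * gg1 a z0 z1 - cc1 a * gg0 a z0 z1"
    by (simp add: DD_def gg0_def gg1_def algebra_simps)
  ultimately show "DD a = 0" using z g by auto
qed

lemma sing_iff: "(\<exists>x y z. singular_zero a x y z) \<longleftrightarrow> DD a = 0"
proof
  assume "\<exists>x y z. singular_zero a x y z"
  then obtain x y z where "singular_zero a x y z" by blast
  then have s: "SZ a (x 0) (x 1) (y 0) (y 1) (z 0) (z 1)" by (simp add: singular_zero_SZ)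
  then have "z 0 \<noteq> 0 \<or> z 1 \<noteq> 0" by (simp add: SZ_def)
  moreover have "gg0 a (z 0) (z 1) = 0 \<and> gg1 a (z 0) (z 1) = 0" using fwd[OF s] .
  ultimately show "DD a = 0" using DD_iff by blast
next
  assume "DD a = 0"
  then obtain z0 z1 where z: "z0 \<noteq> 0 \<or> z1 \<noteq> 0" and g: "gg0 a z0 z1 = 0" "gg1 a z0 z1 = 0"
    using DD_iff by blast
  obtain x0 x1 y0 y1 where "SZ a x0 x1 y0 y1 z0 z1" using bwd[OF z g] by blast
  then have "singular_zero a (vec2 x0 x1) (vec2 y0 y1) (vec2 z0 z1)"
    by (simp add: singular_zero_SZ)
  then show "\<exists>x y z. singular_zero a x y z" by blast
qed

definition Dp :: cmpoly where "Dp = DD Xv"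

lemma mp_eval_Dp: "mp_eval Dp a = DD a"
  unfolding mp_eval_gev Dp_def by (rule gev_DD[OF rhom_id])

definition hdeg :: "nat \<Rightarrow> cmpoly \<Rightarrow> bool" where
  "hdeg d p \<longleftrightarrow> (\<forall>m\<in>Poly_Mapping.keys p. mon_degree m = d)"

lemma mon_degree_superset:
  assumes "finite S" "Poly_Mapping.keys m \<subseteq> S"
  shows "mon_degree m = (\<Sum>i\<in>S. Poly_Mapping.lookup m i)"
  unfolding mon_degree_def
  by (rule sum.mono_neutral_left[OF assms]) (simp add: in_keys_iff)

lemma mon_degree_add: "mon_degree (m + n) = mon_degree m + mon_degree n"
proof -
  let ?S = "Poly_Mapping.keys m \<union> Poly_Mapping.keys n"
  have f: "finite ?S" by simp
  have "mon_degree (m + n) = (\<Sum>i\<in>?S. Poly_Mapping.lookup (m + n) i)"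
    by (rule mon_degree_superset[OF f]) (fact keys_add)
  also have "\<dots> = (\<Sum>i\<in>?S. Poly_Mapping.lookup m i) + (\<Sum>i\<in>?S. Poly_Mapping.lookup n i)"
    by (simp only: lookup_add sum.distrib)
  also have "\<dots> = mon_degree m + mon_degree n"
  proof -
    have e1: "mon_degree m = (\<Sum>i\<in>?S. Poly_Mapping.lookup m i)"
      by (rule mon_degree_superset[OF f]) simp
    have e2: "mon_degree n = (\<Sum>i\<in>?S. Poly_Mapping.lookup n i)"
      by (rule mon_degree_superset[OF f]) simp
    show ?thesis unfolding e1 e2 ..
  qed
  finally show ?thesis .
qed

lemma hdeg_add: "hdeg d p \<Longrightarrow> hdeg d q \<Longrightarrow> hdeg d (p + q)"
  unfolding hdeg_def using keys_add[of p q] by (meson UnE subsetD)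

lemma keys_uminus: "Poly_Mapping.keys (- p) = Poly_Mapping.keys (p::cmpoly)"
  by (simp add: in_keys_iff set_eq_iff)

lemma hdeg_minus: "hdeg d p \<Longrightarrow> hdeg d (- p)"
  unfolding hdeg_def keys_uminus .

lemma hdeg_diff: "hdeg d p \<Longrightarrow> hdeg d q \<Longrightarrow> hdeg d (p - q)"
  using hdeg_add[of d p "- q"] hdeg_minus[of d q] by simp

lemma hdeg_mult: "hdeg d p \<Longrightarrow> hdeg e q \<Longrightarrow> n = d + e \<Longrightarrow> hdeg n (p * q)"
  unfolding hdeg_def using keys_mult[of p q] by (force simp: mon_degree_add)

lemma hdeg_X: "hdeg 1 (Xv i)"
  by (simp add: hdeg_def Xv_def mon_degree_def)

lemma hdeg_numeral: "hdeg 0 (numeral n :: cmpoly)"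
proof -
  have e: "(numeral n :: cmpoly) = Poly_Mapping.single 0 (numeral n)" by (rule single_numeral[symmetric])
  have "Poly_Mapping.keys (numeral n :: cmpoly) \<subseteq> {0}" by (subst e) (simp del: single_numeral)
  then show ?thesis unfolding hdeg_def
  proof (intro ballI)
    fix m assume "m \<in> Poly_Mapping.keys (numeral n :: cmpoly)"
    then have "m = 0" using \<open>Poly_Mapping.keys (numeral n :: cmpoly) \<subseteq> {0}\<close> by blast
    then show "mon_degree m = 0" by (simp add: mon_degree_def)
  qed
qed

lemma hdeg3: "hdeg 1 a \<Longrightarrow> hdeg 1 b \<Longrightarrow> hdeg 1 c \<Longrightarrow> hdeg 3 (a * b * c)"
  by (rule hdeg_mult[of 2 _ 1], rule hdeg_mult[of 1 _ 1]) auto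

lemma hdeg_cc: "hdeg 3 (cc0 Xv)" "hdeg 3 (cc1 Xv)" "hdeg 3 (cc2 Xv)"
  unfolding cc0_def cc1_def cc2_def
  by (intro hdeg_add hdeg_diff hdeg3 hdeg_X)+

lemma hdeg_Dp: "hdeg 6 Dp"
  unfolding Dp_def DD_def
  apply (rule hdeg_diff)
   apply (rule hdeg_mult[OF hdeg_cc(2) hdeg_cc(2)], simp)
  apply (rule hdeg_mult[of 3 _ 3 _ 6, OF _ hdeg_cc(3)])
   apply (rule hdeg_mult[OF hdeg_numeral hdeg_cc(1)])
  by simp_all

definition vbelow :: "cmpoly \<Rightarrow> bool" where
  "vbelow p \<longleftrightarrow> (\<forall>m\<in>Poly_Mapping.keys p. Poly_Mapping.keys m \<subseteq> {..<12})"

lemma vbelow_add: "vbelow p \<Longrightarrow> vbelow q \<Longrightarrow> vbelow (p + q)"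
  unfolding vbelow_def using keys_add[of p q] by (meson UnE subsetD)
lemma vbelow_diff: "vbelow p \<Longrightarrow> vbelow q \<Longrightarrow> vbelow (p - q)"
  using vbelow_add[of p "- q"] by (simp add: vbelow_def keys_uminus)
lemma vbelow_mult: "vbelow p \<Longrightarrow> vbelow q \<Longrightarrow> vbelow (p * q)"
proof -
  assume a: "vbelow p" "vbelow q"
  show "vbelow (p * q)" unfolding vbelow_def
  proof
    fix m assume "m \<in> Poly_Mapping.keys (p * q)"
    then obtain m1 m2 where "m = m1 + m2" "m1 \<in> Poly_Mapping.keys p" "m2 \<in> Poly_Mapping.keys q"
      using keys_mult[of p q] by blast
    then show "Poly_Mapping.keys m \<subseteq> {..<12}"
      using a keys_add[of m1 m2] unfolding vbelow_def by blast
  qed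
qed
lemma vbelow_X: "i < 12 \<Longrightarrow> vbelow (Xv i)"
  by (simp add: vbelow_def Xv_def)
lemma vbelow_numeral: "vbelow (numeral n)"
proof -
  have e: "(numeral n :: cmpoly) = Poly_Mapping.single 0 (numeral n)" by (rule single_numeral[symmetric])
  have "Poly_Mapping.keys (numeral n :: cmpoly) \<subseteq> {0}" by (subst e) (simp del: single_numeral)
  then show ?thesis unfolding vbelow_def
  proof (intro ballI)
    fix m assume "m \<in> Poly_Mapping.keys (numeral n :: cmpoly)"
    then have "m = 0" using \<open>Poly_Mapping.keys (numeral n :: cmpoly) \<subseteq> {0}\<close> by blast
    then show "Poly_Mapping.keys m \<subseteq> {..<12}" by simp
  qed
qed

lemma vbelow_Dp: "vbelow Dp"
  unfolding Dp_def DD_def cc0_def cc1_def cc2_def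
  by (intro vbelow_add vbelow_diff vbelow_mult vbelow_X vbelow_numeral; simp)



lemma prod_mono:
  fixes p q :: "'a::idom poly"
  assumes pq: "p * q \<noteq> 0" and only: "\<forall>k. coeff (p * q) k \<noteq> 0 \<longrightarrow> k = n"
  shows "\<forall>k. coeff p k \<noteq> 0 \<longrightarrow> k = degree p"
proof -
  have p0: "p \<noteq> 0" and q0: "q \<noteq> 0" using pq by auto
  define k0 where "k0 = (LEAST k. coeff p k \<noteq> 0)"
  define l0 where "l0 = (LEAST k. coeff q k \<noteq> 0)"
  have cp: "coeff p (degree p) \<noteq> 0" using p0 by simp
  have cq: "coeff q (degree q) \<noteq> 0" using q0 by simp
  have k0: "coeff p k0 \<noteq> 0" unfolding k0_def using cp by (rule LeastI)
  have l0: "coeff q l0 \<noteq> 0" unfolding l0_def using cq by (rule LeastI)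
  have k0le: "k0 \<le> degree p" unfolding k0_def using cp by (rule Least_le)
  have l0le: "l0 \<le> degree q" unfolding l0_def using cq by (rule Least_le)
  have below_p: "coeff p i = 0" if "i < k0" for i using not_less_Least[OF that[unfolded k0_def]] by simp
  have below_q: "coeff q i = 0" if "i < l0" for i using not_less_Least[OF that[unfolded l0_def]] by simp
  have "coeff (p * q) (k0 + l0) = (\<Sum>i\<le>k0 + l0. coeff p i * coeff q (k0 + l0 - i))"
    by (rule coeff_mult)
  also have "\<dots> = coeff p k0 * coeff q (k0 + l0 - k0) + (\<Sum>i\<in>{..k0 + l0} - {k0}. coeff p i * coeff q (k0 + l0 - i))"
    by (rule sum.remove) auto
  also have "(\<Sum>i\<in>{..k0 + l0} - {k0}. coeff p i * coeff q (k0 + l0 - i)) = 0"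
  proof (rule sum.neutral, rule ballI)
    fix i assume i: "i \<in> {..k0 + l0} - {k0}"
    show "coeff p i * coeff q (k0 + l0 - i) = 0"
    proof (cases "i < k0")
      case True then show ?thesis using below_p by simp
    next
      case False
      then have "k0 + l0 - i < l0" using i by auto
      then show ?thesis using below_q by simp
    qed
  qed
  finally have "coeff (p * q) (k0 + l0) \<noteq> 0" using k0 l0 by simp
  then have n1: "k0 + l0 = n" using only by blast
  have "coeff (p * q) (degree p + degree q) \<noteq> 0"
    using coeff_mult_degree_sum[of p q] cp cq by simp
  then have n2: "degree p + degree q = n" using only by blast
  have kd: "k0 = degree p" using n1 n2 k0le l0le by linarith
  show ?thesis
  proof (intro allI impI)
    fix k assume "coeff p k \<noteq> 0"
    then have "k0 \<le> k" unfolding k0_def by (rule Least_le)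
    moreover have "k \<le> degree p" using \<open>coeff p k \<noteq> 0\<close> by (rule le_degree)
    ultimately show "k = degree p" using kd by simp
  qed
qed

definition hs :: "complex \<Rightarrow> cmpoly poly" where "hs c = [:Poly_Mapping.single 0 c:]"
definition vs :: "nat \<Rightarrow> cmpoly poly" where "vs i = monom (Xv i) 1"
definition sig :: "cmpoly \<Rightarrow> cmpoly poly" where "sig p = gev hs vs p"

lemma rhom_hs: "rhom hs"
  unfolding rhom_def hs_def by (simp add: single_add mult_single mult.commute)

lemma Xv_pow: "Xv i ^ k = Poly_Mapping.single (Poly_Mapping.single i k) 1"
proof (induction k)
  case 0 then show ?case by simp
next
  case (Suc k)
  have "Xv i ^ Suc k = Poly_Mapping.single (Poly_Mapping.single i 1) 1 * Poly_Mapping.single (Poly_Mapping.single i k) (1::complex)"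
    using Suc by (simp add: Xv_def)
  also have "\<dots> = Poly_Mapping.single (Poly_Mapping.single i (Suc k)) 1"
    by (simp add: mult_single single_add[symmetric])
  finally show ?case .
qed

lemma prod_monom: "(\<Prod>i\<in>A. monom (f i) (g i)) = monom (\<Prod>i\<in>A. f i) (\<Sum>i\<in>A. g i)"
  by (induction A rule: infinite_finite_induct) (simp_all add: mult_monom monom_0 one_pCons)

lemma prod_single1: "(\<Prod>i\<in>A. Poly_Mapping.single (f i) (1::complex)) = Poly_Mapping.single (\<Sum>i\<in>A. f i) 1"
  by (induction A rule: infinite_finite_induct) (simp_all add: mult_single)

lemma monev_vs: "monev vs m = monom (Poly_Mapping.single m 1) (mon_degree m)"
proof -
  have "monev vs m = (\<Prod>i\<in>Poly_Mapping.keys m. monom (Xv i ^ Poly_Mapping.lookup m i) (Poly_Mapping.lookup m i))"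
    unfolding monev_def vs_def by (simp add: monom_power)
  also have "\<dots> = monom (\<Prod>i\<in>Poly_Mapping.keys m. Xv i ^ Poly_Mapping.lookup m i) (mon_degree m)"
    unfolding prod_monom mon_degree_def ..
  also have "(\<Prod>i\<in>Poly_Mapping.keys m. Xv i ^ Poly_Mapping.lookup m i) = Poly_Mapping.single m 1"
    unfolding Xv_pow prod_single1 using pm_expand[of m] by simp
  finally show ?thesis .
qed

lemma sig_expand: "sig p = (\<Sum>m\<in>Poly_Mapping.keys p. monom (Poly_Mapping.single m (Poly_Mapping.lookup p m)) (mon_degree m))"
  unfolding sig_def gev_def monev_vs hs_def
  by (rule sum.cong) (simp_all add: monom_0[symmetric] mult_monom mult_single)

lemma coeff_sig: "coeff (sig p) k = (\<Sum>m\<in>Poly_Mapping.keys p. if mon_degree m = k then Poly_Mapping.single m (Poly_Mapping.lookup p m) else 0)"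
  unfolding sig_expand coeff_sum by simp

lemma sig_S1:
  assumes "m \<in> Poly_Mapping.keys p"
  shows "coeff (sig p) (mon_degree m) \<noteq> 0"
proof -
  have "Poly_Mapping.lookup (coeff (sig p) (mon_degree m)) m =
     (\<Sum>m'\<in>Poly_Mapping.keys p. Poly_Mapping.lookup (if mon_degree m' = mon_degree m then Poly_Mapping.single m' (Poly_Mapping.lookup p m') else 0) m)"
    unfolding coeff_sig lookup_sum ..
  also have "\<dots> = (\<Sum>m'\<in>Poly_Mapping.keys p. if m' = m then Poly_Mapping.lookup p m' else 0)"
  proof (rule sum.cong)
    fix m' assume "m' \<in> Poly_Mapping.keys p"
    show "Poly_Mapping.lookup (if mon_degree m' = mon_degree m then Poly_Mapping.single m' (Poly_Mapping.lookup p m') else 0) m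
        = (if m' = m then Poly_Mapping.lookup p m' else 0)"
      by (cases "m' = m") (simp_all add: lookup_single_not_eq)
  qed simp
  also have "\<dots> = Poly_Mapping.lookup p m" using assms by simp
  finally show ?thesis using assms by (auto simp: in_keys_iff)
qed

lemma sig_S2:
  assumes "hdeg n p" "k \<noteq> n"
  shows "coeff (sig p) k = 0"
  unfolding coeff_sig using assms unfolding hdeg_def by (intro sum.neutral) auto

lemma hom_factor:
  assumes hD: "hdeg n D" and D0: "D \<noteq> 0" and DGH: "D = G * H"
  shows "hdeg (degree (sig G)) G" "degree (sig G) + degree (sig H) = n"
proof -
  have sm: "sig D = sig G * sig H" unfolding DGH sig_def by (rule gev_mult[OF rhom_hs])
  obtain m where m: "m \<in> Poly_Mapping.keys D" using D0 by (metis ex_in_conv keys_eq_empty)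
  have mn: "mon_degree m = n" using hD m unfolding hdeg_def by blast
  have cn: "coeff (sig D) n \<noteq> 0" using sig_S1[OF m] mn by simp
  then have sD0: "sig D \<noteq> 0" by auto
  have only: "\<forall>k. coeff (sig D) k \<noteq> 0 \<longrightarrow> k = n" using sig_S2[OF hD] by blast
  have "\<forall>k. coeff (sig G) k \<noteq> 0 \<longrightarrow> k = degree (sig G)"
    by (rule prod_mono) (use sD0 only sm in simp_all)
  then show "hdeg (degree (sig G)) G" unfolding hdeg_def using sig_S1 by blast
  have "degree (sig D) = n"
  proof -
    have "coeff (sig D) (degree (sig D)) \<noteq> 0" using sD0 by simp
    then show ?thesis using only by blast
  qed
  moreover have "degree (sig D) = degree (sig G) + degree (sig H)"
    unfolding sm by (rule degree_mult_eq) (use sD0 sm in auto)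
  ultimately show "degree (sig G) + degree (sig H) = n" by simp
qed

lemma hdeg0_unit:
  assumes "hdeg 0 G" "G \<noteq> 0"
  shows "G dvd 1"
proof -
  have k: "Poly_Mapping.keys G \<subseteq> {0}"
  proof
    fix m assume m: "m \<in> Poly_Mapping.keys G"
    then have "(\<Sum>i\<in>Poly_Mapping.keys m. Poly_Mapping.lookup m i) = 0"
      using assms(1) unfolding hdeg_def mon_degree_def by blast
    then have "\<forall>i\<in>Poly_Mapping.keys m. Poly_Mapping.lookup m i = 0" by simp
    then have "m = 0" by (metis all_not_in_conv in_keys_iff keys_eq_empty)
    then show "m \<in> {0}" by simp
  qed
  define c where "c = Poly_Mapping.lookup G 0"
  have G: "G = Poly_Mapping.single 0 c"
  proof -
    have "G = (\<Sum>m\<in>Poly_Mapping.keys G. Poly_Mapping.single m (Poly_Mapping.lookup G m))" by (rule pm_expand)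
    also have "\<dots> = (\<Sum>m\<in>{0}. Poly_Mapping.single m (Poly_Mapping.lookup G m))"
      by (rule sum.mono_neutral_left) (use k in \<open>auto simp: in_keys_iff\<close>)
    finally show ?thesis unfolding c_def by simp
  qed
  have "c \<noteq> 0" using assms(2) G by auto
  then have "G * Poly_Mapping.single 0 (1 / c) = 1" unfolding G by (simp add: mult_single)
  then show ?thesis by (metis dvdI)
qed



definition tt :: "complex poly" where "tt = [:0, 1:]"
definition Sv :: "complex poly poly" where "Sv = [:0, 1:]"
definition Tv :: "complex poly poly" where "Tv = [:tt:]"

definition vpsi :: "nat \<Rightarrow> complex poly poly" where
  "vpsi i = (if i = 0 then Tv else if i = 3 then 1 else if i = 4 then 1 else if i = 6 then -1
     else if i = 7 then - Tv else if i = 8 then -1 else if i = 9 then Tv else if i = 11 then Sv else 0)"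
definition hpsi :: "complex \<Rightarrow> complex poly poly" where "hpsi c = [:[:c:]:]"
definition psi :: "cmpoly \<Rightarrow> complex poly poly" where "psi p = gev hpsi vpsi p"

definition vrho :: "nat \<Rightarrow> complex poly" where
  "vrho i = (if i = 0 then tt else if i = 3 then 1 else if i = 4 then 1 else if i = 6 then -1
     else if i = 7 then - tt else if i = 8 then -1 else if i = 9 then tt else 0)"
definition beta :: "nat \<Rightarrow> complex" where
  "beta i = (if i = 0 then 1 else if i = 7 then -1 else if i = 9 then 1 else 0)"

lemma rhom_hpsi: "rhom hpsi" unfolding rhom_def hpsi_def by (simp add: pCons_one)

lemma DD_vpsi: "DD vpsi = (Tv ^ 3 - 1) ^ 2 - 4 * Tv ^ 2 * Sv"
  unfolding DD_def cc0_def cc1_def cc2_def by (simp add: vpsi_def algebra_simps power2_eq_square power3_eq_cube)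

lemma DD_beta: "DD beta = 1"
  unfolding DD_def cc0_def cc1_def cc2_def by (simp add: beta_def)


definition Kc :: "complex poly \<Rightarrow> complex poly poly" where "Kc x = [:x:]"
lemma rhom_Kc: "rhom Kc" unfolding rhom_def Kc_def by (simp add: pCons_one)

definition Bp :: "complex poly" where "Bp = (tt ^ 3 - 1) ^ 2"
definition Ap :: "complex poly" where "Ap = - (4 * tt ^ 2)"

lemma psi_Dp: "psi Dp = [:Bp, Ap:]"
proof -
  have "psi Dp = DD vpsi" unfolding psi_def Dp_def by (rule gev_DD[OF rhom_hpsi])
  also have "\<dots> = (Tv ^ 3 - 1) ^ 2 - 4 * Tv ^ 2 * Sv" by (rule DD_vpsi)
  also have "(Tv ^ 3 - 1) ^ 2 = Kc Bp" unfolding Bp_def Tv_def Kc_def[symmetric]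
    by (simp only: rhom_power[OF rhom_Kc] rhom_diff[OF rhom_Kc] rhom_one[OF rhom_Kc])
  also have "4 * Tv ^ 2 = Kc (- Ap)" unfolding Ap_def Tv_def Kc_def[symmetric]
    by (simp only: minus_minus rhom_mult[OF rhom_Kc] rhom_numeral[OF rhom_Kc] rhom_power[OF rhom_Kc])
  finally show ?thesis by (simp add: Kc_def Sv_def)
qed

lemma Ap_nz: "Ap \<noteq> 0" by (simp add: Ap_def tt_def)
lemma poly_Bp0: "poly Bp 0 = 1" by (simp add: Bp_def tt_def)
lemma poly_Ap: "poly Ap r = - 4 * r ^ 2" by (simp add: Ap_def tt_def)

lemma degP: "degree [:Bp, Ap:] = 1" using Ap_nz by simp

lemma poly0_rhom: "rhom (\<lambda>P::complex poly poly. poly P 0)"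
  unfolding rhom_def by simp

lemma comp_vpsi: "(\<lambda>P. poly P 0) \<circ> vpsi = vrho"
  by (rule ext) (simp add: vpsi_def vrho_def Tv_def Sv_def)
lemma comp_hpsi: "(\<lambda>P. poly P 0) \<circ> hpsi = (\<lambda>c. [:c:])"
  by (rule ext) (simp add: hpsi_def)

lemma rhom_const: "rhom (\<lambda>c::complex. [:c:])" unfolding rhom_def by (simp add: pCons_one)

lemma coeff_psi0: "coeff (psi G) 0 = gev (\<lambda>c. [:c:]) vrho G"
proof -
  have "coeff (psi G) 0 = poly (psi G) 0" by (simp add: poly_0_coeff_0)
  also have "\<dots> = gev ((\<lambda>P. poly P 0) \<circ> hpsi) ((\<lambda>P. poly P 0) \<circ> vpsi) G"
    unfolding psi_def by (rule gev_nat[OF rhom_hpsi poly0_rhom])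
  finally show ?thesis unfolding comp_vpsi comp_hpsi .
qed

lemma deg_vrho: "degree (vrho i) \<le> 1"
  by (simp add: vrho_def tt_def)
lemma coeff_vrho: "coeff (vrho i) 1 = beta i"
  by (simp add: vrho_def beta_def tt_def)



lemma coeff_mult_bound:
  fixes p q :: "'a::comm_ring_1 poly"
  assumes "degree p \<le> a" "degree q \<le> b"
  shows "coeff (p * q) (a + b) = coeff p a * coeff q b"
proof -
  have "coeff (p * q) (a + b) = (\<Sum>i\<le>a + b. coeff p i * coeff q (a + b - i))"
    by (rule coeff_mult)
  also have "\<dots> = coeff p a * coeff q (a + b - a) + (\<Sum>i\<in>{..a + b} - {a}. coeff p i * coeff q (a + b - i))"
    by (rule sum.remove) auto
  also have "(\<Sum>i\<in>{..a + b} - {a}. coeff p i * coeff q (a + b - i)) = 0"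
  proof (rule sum.neutral, rule ballI)
    fix i assume i: "i \<in> {..a + b} - {a}"
    show "coeff p i * coeff q (a + b - i) = 0"
    proof (cases "i < a")
      case True
      then have "degree q < a + b - i" using assms(2) by linarith
      then show ?thesis by (simp add: coeff_eq_0)
    next
      case False
      then have "degree p < i" using i assms(1) by auto
      then show ?thesis by (simp add: coeff_eq_0)
    qed
  qed
  finally show ?thesis by simp
qed

lemma pow_lin:
  fixes w :: "'a::comm_ring_1 poly"
  assumes "degree w \<le> 1"
  shows "degree (w ^ n) \<le> n \<and> coeff (w ^ n) n = coeff w 1 ^ n"
proof (induction n)
  case 0 then show ?case by simp
next
  case (Suc n)
  have d: "degree (w ^ Suc n) \<le> Suc n"
    using degree_mult_le[of w "w ^ n"] assms Suc by simp
  have "coeff (w * w ^ n) (1 + n) = coeff w 1 * coeff (w ^ n) n"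
    by (rule coeff_mult_bound[OF assms]) (use Suc in simp)
  then show ?case using d Suc by simp
qed

lemma prod_lin:
  fixes w :: "nat \<Rightarrow> 'a::comm_ring_1 poly"
  assumes "finite K" "\<forall>i. degree (w i) \<le> 1"
  shows "degree (\<Prod>i\<in>K. w i ^ e i) \<le> (\<Sum>i\<in>K. e i) \<and> coeff (\<Prod>i\<in>K. w i ^ e i) (\<Sum>i\<in>K. e i) = (\<Prod>i\<in>K. coeff (w i) 1 ^ e i)"
  using assms(1)
proof (induction K rule: finite_induct)
  case empty then show ?case by simp
next
  case (insert x F)
  have px: "degree (w x ^ e x) \<le> e x \<and> coeff (w x ^ e x) (e x) = coeff (w x) 1 ^ e x"
    using pow_lin assms(2) by blast
  have d: "degree (w x ^ e x * (\<Prod>i\<in>F. w i ^ e i)) \<le> e x + (\<Sum>i\<in>F. e i)"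
    using degree_mult_le[of "w x ^ e x" "\<Prod>i\<in>F. w i ^ e i"] px insert.IH by linarith
  have c: "coeff (w x ^ e x * (\<Prod>i\<in>F. w i ^ e i)) (e x + (\<Sum>i\<in>F. e i)) = coeff (w x ^ e x) (e x) * coeff (\<Prod>i\<in>F. w i ^ e i) (\<Sum>i\<in>F. e i)"
    by (rule coeff_mult_bound) (use px insert.IH in simp_all)
  show ?case using insert d c px by simp
qed

lemma lead_gev:
  assumes w: "\<forall>i. degree (w i) \<le> 1" and hG: "hdeg d G"
  shows "coeff (gev (\<lambda>c::complex. [:c:]) w G) d = gev (\<lambda>c. c) (\<lambda>i. coeff (w i) 1) G"
proof -
  have "coeff (gev (\<lambda>c::complex. [:c:]) w G) d = (\<Sum>m\<in>Poly_Mapping.keys G. Poly_Mapping.lookup G m * coeff (monev w m) d)"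
    unfolding gev_def coeff_sum by simp
  also have "\<dots> = (\<Sum>m\<in>Poly_Mapping.keys G. Poly_Mapping.lookup G m * monev (\<lambda>i. coeff (w i) 1) m)"
  proof (rule sum.cong)
    fix m assume m: "m \<in> Poly_Mapping.keys G"
    then have "d = (\<Sum>i\<in>Poly_Mapping.keys m. Poly_Mapping.lookup m i)"
      using hG unfolding hdeg_def mon_degree_def by auto
    then show "Poly_Mapping.lookup G m * coeff (monev w m) d = Poly_Mapping.lookup G m * monev (\<lambda>i. coeff (w i) 1) m"
      unfolding monev_def using prod_lin[of "Poly_Mapping.keys m" w "Poly_Mapping.lookup m"] w by simp
  qed simp
  also have "\<dots> = gev (\<lambda>c. c) (\<lambda>i. coeff (w i) 1) G" unfolding gev_def ..
  finally show ?thesis .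
qed

lemma rho_lead: "hdeg d G \<Longrightarrow> coeff (gev (\<lambda>c::complex. [:c:]) vrho G) d = mp_eval G beta"
  using lead_gev[of vrho d G] deg_vrho unfolding coeff_vrho mp_eval_gev by simp

lemma key:
  assumes hG: "hdeg d G" and d: "d \<ge> 1" and Gb: "mp_eval G beta \<noteq> 0"
    and deg0: "degree (psi G) = 0" and prod: "psi G * Q = [:Bp, Ap:]"
  shows False
proof -
  define g0 where "g0 = coeff (psi G) 0"
  have "psi G = [:g0:]" unfolding g0_def using degree_0_id[OF deg0] by simp
  then have sm: "smult g0 Q = [:Bp, Ap:]" using prod by simp
  have cB: "g0 * coeff Q 0 = Bp" using arg_cong[OF sm, of "\<lambda>p. coeff p 0"] by simp
  have cA: "g0 * coeff Q 1 = Ap" using arg_cong[OF sm, of "\<lambda>p. coeff p 1"] by simp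
  have g0r: "g0 = gev (\<lambda>c. [:c:]) vrho G" unfolding g0_def by (rule coeff_psi0)
  have "coeff g0 d \<noteq> 0" unfolding g0r rho_lead[OF hG] by (rule Gb)
  then have "d \<le> degree g0" by (rule le_degree)
  then have "degree g0 \<noteq> 0" using d by simp
  then have "\<not> constant (poly g0)" unfolding constant_degree .
  then obtain r where r: "poly g0 r = 0" using fundamental_theorem_of_algebra by blast
  have "poly Ap r = 0" using cA r by (metis mult_zero_left poly_mult)
  then have "r = 0" unfolding poly_Ap by simp
  have "poly Bp r = 0" using cB r by (metis mult_zero_left poly_mult)
  then show False using \<open>r = 0\<close> poly_Bp0 by simp
qed

lemma Dp_beta: "mp_eval Dp beta = 1"
  unfolding mp_eval_Dp by (rule DD_beta)

lemma Dp_nz: "Dp \<noteq> 0"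
  using Dp_beta by (auto simp: mp_eval_def)

lemma mp_eval_mult: "mp_eval (p * q) a = mp_eval p a * mp_eval q a"
  unfolding mp_eval_gev by (rule gev_mult[OF rhom_id])
lemma mp_eval_one: "mp_eval 1 a = 1"
  unfolding mp_eval_gev by (rule gev_one[OF rhom_id])

lemma DD_zero: "DD (\<lambda>i. 0 :: complex) = 0"
  by (simp add: DD_def cc0_def cc1_def cc2_def)

lemma irr_Dp: "irreducible Dp"
  unfolding irreducible_def
proof (intro conjI allI impI)
  show "Dp \<noteq> 0" by (rule Dp_nz)
  show "\<not> Dp dvd 1"
  proof
    assume "Dp dvd 1"
    then obtain E where E: "Dp * E = 1" by (metis dvdE)
    have "mp_eval (Dp * E) (\<lambda>i. 0) = 0" unfolding mp_eval_mult mp_eval_Dp DD_zero by simp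
    then show False unfolding E mp_eval_one by simp
  qed
  fix G H assume DGH: "Dp = G * H"
  have G0: "G \<noteq> 0" and H0: "H \<noteq> 0" using Dp_nz DGH by auto
  have hG: "hdeg (degree (sig G)) G" and sumd: "degree (sig G) + degree (sig H) = 6"
    using hom_factor[OF hdeg_Dp Dp_nz DGH] by auto
  have hH: "hdeg (degree (sig H)) H"
    using hom_factor[OF hdeg_Dp Dp_nz, of H G] DGH by (simp add: mult.commute)
  show "G dvd 1 \<or> H dvd 1"
  proof (cases "degree (sig G) = 0 \<or> degree (sig H) = 0")
    case True
    then show ?thesis using hdeg0_unit hG hH G0 H0 by auto
  next
    case False
    have "mp_eval G beta * mp_eval H beta = 1" using Dp_beta DGH mp_eval_mult by metis
    then have Gb: "mp_eval G beta \<noteq> 0" and Hb: "mp_eval H beta \<noteq> 0" by auto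
    have "psi Dp = psi G * psi H" unfolding DGH psi_def by (rule gev_mult[OF rhom_hpsi])
    then have pp: "psi G * psi H = [:Bp, Ap:]" using psi_Dp by simp
    have "psi G \<noteq> 0" "psi H \<noteq> 0" using pp Ap_nz by auto
    then have "degree (psi G) + degree (psi H) = 1" using pp degP degree_mult_eq by metis
    then consider "degree (psi G) = 0" | "degree (psi H) = 0" by linarith
    then show ?thesis
    proof cases
      case 1
      then show ?thesis using key[OF hG _ Gb 1 pp] False by simp
    next
      case 2
      have pp': "psi H * psi G = [:Bp, Ap:]" using pp by (simp add: mult.commute)
      then show ?thesis using key[OF hH _ Hb 2 pp'] False by simp
    qed
  qed
qed

theorem theorem3p11:
  shows "\<exists>D :: cmpoly. mp_vars_below 12 D \<and> mp_homogeneous 6 D \<and> irreducible D \<and>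
           (\<forall>a. (\<exists>i<12. a i \<noteq> 0) \<longrightarrow> (a \<in> discriminant \<longleftrightarrow> mp_eval D a = 0))"
proof (intro exI conjI allI impI)
  show "mp_vars_below 12 Dp" using vbelow_Dp unfolding vbelow_def mp_vars_below_def .
  show "mp_homogeneous 6 Dp" using hdeg_Dp Dp_nz unfolding hdeg_def mp_homogeneous_def by blast
  show "irreducible Dp" by (rule irr_Dp)
  fix a :: "nat \<Rightarrow> complex" assume "\<exists>i<12. a i \<noteq> 0"
  then show "a \<in> discriminant \<longleftrightarrow> mp_eval Dp a = 0"
    unfolding discriminant_def mp_eval_Dp using sing_iff[of a] by blast
qed


end
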